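(* Let $X\sim p^{\mathbb{Z}^d}$, $Y\sim q^{\mathbb{Z}^d}$ be i.i.d. processes over finite alphabets $A,B$ with equal entropy $h=h(p)=h(q)$, and let $\phi:X\to Y$ be a finitary homomorphism with $\mathbf{E}[R_\phi^{d/2}]<\infty$. Let $\delta_N\searrow0$ be a sequence such that $\mathbf{E}[|\mathcal{J}^c_{N,\lfloor\delta_N N\rfloor}|]=o(N^{d/2})$. For each large enough $N$ consider the $(\mathbb{T}_N^d,\lfloor\delta_N N\rfloor)$-modeling $\hat X\sim p^{\mathbb{T}_N^d}$, $\hat Y=\hat\phi^{\lfloor\delta_NN\rfloor}(\hat X)$. Then, as $N\to\infty$: (1) $\mathbf{E}[|\mathcal{J}^c_{N,\lfloor\delta_N N\rfloor}|]/\sqrt{|\mathbb{T}_N^d|}=o(1)$; (2) $\mathbf{E}\Big[\frac{1}{\sqrt{|\mathbb{T}_N^d|}}\sum_{u\in\mathbb{T}_N^d}(h+\log p(\hat X_u))\Big]^+=\frac{\sqrt{\mathrm{Var}(\log p(X_0))}}{\sqrt{2\pi}}\pm o(1)$; (3) $\mathbf{E}\Big[\frac{1}{\sqrt{|\mathbb{T}_N^d|}}\sum_{u\in\mathbb{T}_N^d:\ \hat Y_u\in B}(h+\log q(\hat Y_u))\Big]^+=\frac{\sqrt{\mathrm{Var}(\log q(Y_0))}}{\sqrt{2\pi}}\pm o(1)$.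
   Context: $c^+=\max(c,0)$; $h(p)=-\sum_a p_a\log p_a$. A homomorphism $\phi:X\to Y$ is a measurable shift-commuting map $A^{\mathbb{Z}^d}\to B^{\mathbb{Z}^d}$ pushing $\mu=p^{\mathbb{Z}^d}$ to $\nu=q^{\mathbb{Z}^d}$. Its coding radius is $R_\phi(x)=\min\{n\in\mathbb{N}\cup\{\infty\}:\text{for }\mu\text{-a.e. }a,\ a|_{[-n,n]^d}=x|_{[-n,n]^d}\Rightarrow\phi(a)_0=\phi(x)_0\}$; finitary means $R_\phi<\infty$ a.s. Let $*\notin B$; for $n\in\mathbb{N}$ put $\phi^n_0(x)=\phi(x)_0$ if $R_\phi(x)\le n$ and $*$ otherwise (a.e. a function of $x|_{[-n,n]^d}$). For $\mathbb{T}_N^d=\mathbb{Z}^d/(N\mathbb{Z})^d$ and $N\ge2n+1$, define $\hat\phi^n:A^{\mathbb{T}_N^d}\to(B\cup\{*\})^{\mathbb{T}_N^d}$ by letting $\hat\phi^n(\hat x)_u$ be $\phi^n_0$ evaluated at the $N$-periodic extension of $T_{-u}\hat x$, where $(T_{-u}\hat x)_v=\hat x_{v+u}$. The $(\mathbb{T}_N^d,n)$-modeling of $\phi$ is $\hat X\sim p^{\mathbb{T}_N^d}$, $\hat Y=\hat\phi^n(\hat X)$, and $\mathcal{J}^c_{N,n}=\{u\in\mathbb{T}_N^d:\hat Y_u=*\}$. *)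

theory Defs
  imports "HOL-Probability.Probability" "HOL-Library.Landau_Symbols"
begin

definition shannon_entropy :: "'a::finite pmf \<Rightarrow> real" where
  "shannon_entropy p = - (\<Sum>a\<in>UNIV. pmf p a * ln (pmf p a))"

text \<open>Configurations on Z^d are functions ('d \<Rightarrow> int) \<Rightarrow> 'a, with 'd a finite index type, d = CARD('d).\<close>
definition iid :: "'a pmf \<Rightarrow> (('d::finite \<Rightarrow> int) \<Rightarrow> 'a) measure" where
  "iid p = PiM UNIV (\<lambda>_. measure_pmf p)"

definition shiftZ :: "('d \<Rightarrow> int) \<Rightarrow> (('d \<Rightarrow> int) \<Rightarrow> 'a) \<Rightarrow> (('d \<Rightarrow> int) \<Rightarrow> 'a)" where
  "shiftZ v x = (\<lambda>u. x (\<lambda>i. u i + v i))"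

definition is_homomorphism ::
  "'a pmf \<Rightarrow> 'b pmf \<Rightarrow> ((('d::finite \<Rightarrow> int) \<Rightarrow> 'a) \<Rightarrow> (('d \<Rightarrow> int) \<Rightarrow> 'b)) \<Rightarrow> bool" where
  "is_homomorphism p q \<phi> \<longleftrightarrow>
     \<phi> \<in> measurable (iid p) (iid q) \<and>
     distr (iid p) (iid q) \<phi> = iid q \<and>
     (\<forall>v. AE x in iid p. \<phi> (shiftZ v x) = shiftZ v (\<phi> x))"

definition cube :: "nat \<Rightarrow> ('d \<Rightarrow> int) set" where
  "cube n = {v. \<forall>i. - int n \<le> v i \<and> v i \<le> int n}"

definition codes_within ::
  "'a pmf \<Rightarrow> ((('d::finite \<Rightarrow> int) \<Rightarrow> 'a) \<Rightarrow> (('d \<Rightarrow> int) \<Rightarrow> 'b)) \<Rightarrow> (('d \<Rightarrow> int) \<Rightarrow> 'a) \<Rightarrow> nat \<Rightarrow> bool" where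
  "codes_within p \<phi> x n \<longleftrightarrow>
     (AE a in iid p. restrict a (cube n) = restrict x (cube n) \<longrightarrow> \<phi> a (\<lambda>_. 0) = \<phi> x (\<lambda>_. 0))"

definition coding_radius ::
  "'a pmf \<Rightarrow> ((('d::finite \<Rightarrow> int) \<Rightarrow> 'a) \<Rightarrow> (('d \<Rightarrow> int) \<Rightarrow> 'b)) \<Rightarrow> (('d \<Rightarrow> int) \<Rightarrow> 'a) \<Rightarrow> enat" where
  "coding_radius p \<phi> x =
     (if \<exists>n. codes_within p \<phi> x n then enat (LEAST n. codes_within p \<phi> x n) else \<infinity>)"

definition finitary ::
  "'a pmf \<Rightarrow> ((('d::finite \<Rightarrow> int) \<Rightarrow> 'a) \<Rightarrow> (('d \<Rightarrow> int) \<Rightarrow> 'b)) \<Rightarrow> bool" where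
  "finitary p \<phi> \<longleftrightarrow> (AE x in iid p. coding_radius p \<phi> x \<noteq> \<infinity>)"

text \<open>phi^n_0 ; the extra symbol * is represented by None.\<close>
definition trunc_code ::
  "'a pmf \<Rightarrow> ((('d::finite \<Rightarrow> int) \<Rightarrow> 'a) \<Rightarrow> (('d \<Rightarrow> int) \<Rightarrow> 'b)) \<Rightarrow> nat \<Rightarrow> (('d \<Rightarrow> int) \<Rightarrow> 'a) \<Rightarrow> 'b option" where
  "trunc_code p \<phi> n x = (if coding_radius p \<phi> x \<le> enat n then Some (\<phi> x (\<lambda>_. 0)) else None)"

text \<open>The torus Z^d/(NZ)^d, represented by coordinates in {0..<N}.\<close>
definition torus :: "nat \<Rightarrow> ('d::finite \<Rightarrow> int) set" where
  "torus N = {u. \<forall>i. 0 \<le> u i \<and> u i < int N}"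

definition torus_iid :: "nat \<Rightarrow> 'a pmf \<Rightarrow> (('d::finite \<Rightarrow> int) \<Rightarrow> 'a) pmf" where
  "torus_iid N p = Pi_pmf (torus N) undefined (\<lambda>_. p)"

text \<open>hat phi^n(xh)_u, where f n is the window function with phi^n_0(x) = f n (x|_{[-n,n]^d}) a.e.;
  it is evaluated on the window of the N-periodic extension of T_{-u} xh.\<close>
definition torus_code ::
  "(nat \<Rightarrow> (('d::finite \<Rightarrow> int) \<Rightarrow> 'a) \<Rightarrow> 'b option) \<Rightarrow> nat \<Rightarrow> nat \<Rightarrow> (('d \<Rightarrow> int) \<Rightarrow> 'a) \<Rightarrow> ('d \<Rightarrow> int) \<Rightarrow> 'b option" where
  "torus_code f N n xh u = f n (restrict (\<lambda>v. xh (\<lambda>i. (v i + u i) mod int N)) (cube n))"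

definition Jc ::
  "(nat \<Rightarrow> (('d::finite \<Rightarrow> int) \<Rightarrow> 'a) \<Rightarrow> 'b option) \<Rightarrow> nat \<Rightarrow> nat \<Rightarrow> (('d \<Rightarrow> int) \<Rightarrow> 'a) \<Rightarrow> ('d \<Rightarrow> int) set" where
  "Jc f N n xh = {u \<in> torus N. torus_code f N n xh u = None}"

end

theory Submission
  imports Defs
begin



lemma pim_restrict:
  fixes r :: "'c::finite pmf" and D :: "'i set" and F :: "('i \<Rightarrow> 'c) \<Rightarrow> real"
  assumes D: "finite D"
  shows "(\<lambda>x. F (restrict x D)) \<in> borel_measurable (PiM UNIV (\<lambda>_. measure_pmf r))"
   and "integral\<^sup>L (PiM UNIV (\<lambda>_. measure_pmf r)) (\<lambda>x. F (restrict x D))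
          = measure_pmf.expectation (Pi_pmf D undefined (\<lambda>_. r)) F"
   and "integrable (PiM UNIV (\<lambda>_. measure_pmf r)) (\<lambda>x. F (restrict x D))"
proof -
  define M where "M = PiM (UNIV::'i set) (\<lambda>_. measure_pmf r)"
  define Z where "Z = PiE D (\<lambda>_. UNIV::'c set)"
  define C where "C z = prod_emb UNIV (\<lambda>_. measure_pmf r) D (PiE D (\<lambda>v. {z v}))" for z :: "'i \<Rightarrow> 'c"
  have finZ: "finite Z" unfolding Z_def using D by (intro finite_PiE) auto
  have Csets: "C z \<in> sets M" for z
    unfolding C_def M_def by (intro sets_PiM_I D) auto
  have memC: "x \<in> C z \<longleftrightarrow> restrict x D = z" if "z \<in> Z" for x z
    using that unfolding C_def Z_def prod_emb_def by (auto simp: space_PiM PiE_iff extensional_def restrict_def fun_eq_iff)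
  have eq: "F (restrict x D) = (\<Sum>z\<in>Z. F z * indicator (C z) x)" for x
  proof -
    have xz: "restrict x D \<in> Z" unfolding Z_def by auto
    have "(\<Sum>z\<in>Z. F z * indicator (C z) x) = (\<Sum>z\<in>{restrict x D}. F z * indicator (C z) x)"
      by (rule sum.mono_neutral_right[OF finZ]) (use xz memC in \<open>auto simp: indicator_def\<close>)
    also have "\<dots> = F (restrict x D)" using memC[OF xz] by simp
    finally show ?thesis by simp
  qed
  have meas: "(\<lambda>x. \<Sum>z\<in>Z. F z * indicator (C z) x) \<in> borel_measurable M"
    using Csets by (intro borel_measurable_sum borel_measurable_times borel_measurable_const borel_measurable_indicator) auto
  then show "(\<lambda>x. F (restrict x D)) \<in> borel_measurable (PiM UNIV (\<lambda>_. measure_pmf r))"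
    unfolding M_def[symmetric] eq .
  interpret P: prob_space M unfolding M_def by (intro prob_space_PiM) (simp add: measure_pmf.prob_space_axioms)
  show "integrable (PiM UNIV (\<lambda>_. measure_pmf r)) (\<lambda>x. F (restrict x D))"
    unfolding M_def[symmetric] eq using Csets
    by (intro Bochner_Integration.integrable_sum integrable_mult_right integrable_real_indicator) (auto simp: P.emeasure_eq_measure)
  have mC: "measure M (C z) = (\<Prod>v\<in>D. pmf r (z v))" for z
  proof -
    have "emeasure M (C z) = (\<Prod>v\<in>D. emeasure (measure_pmf r) {z v})"
      unfolding M_def C_def by (intro emeasure_PiM_emb) (auto simp: D measure_pmf.prob_space_axioms)
    also have "\<dots> = ennreal (\<Prod>v\<in>D. pmf r (z v))"
      by (simp add: emeasure_pmf_single prod_ennreal)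
    finally show ?thesis by (simp add: P.emeasure_eq_measure prod_nonneg)
  qed
  have "integral\<^sup>L M (\<lambda>x. F (restrict x D)) = integral\<^sup>L M (\<lambda>x. \<Sum>z\<in>Z. F z * indicator (C z) x)"
    by (simp add: eq)
  also have "\<dots> = (\<Sum>z\<in>Z. F z * measure M (C z))"
    using Csets by (subst Bochner_Integration.integral_sum) (auto intro!: integrable_mult_right integrable_real_indicator simp: P.emeasure_eq_measure)
  also have "\<dots> = (\<Sum>z\<in>Z. F z * pmf (Pi_pmf D undefined (\<lambda>_. r)) z)"
  proof (intro sum.cong refl)
    fix z assume "z \<in> Z"
    then have "\<And>v. v \<notin> D \<Longrightarrow> z v = undefined" unfolding Z_def by (auto simp: PiE_iff extensional_def)
    then show "F z * measure M (C z) = F z * pmf (Pi_pmf D undefined (\<lambda>_. r)) z"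
      by (simp add: mC pmf_Pi D)
  qed
  also have "\<dots> = measure_pmf.expectation (Pi_pmf D undefined (\<lambda>_. r)) F"
  proof (rule integral_measure_pmf_real[symmetric, OF finZ])
    fix a assume "a \<in> set_pmf (Pi_pmf D undefined (\<lambda>_. r))"
    then show "a \<in> Z" using set_Pi_pmf_subset[OF D, of undefined "\<lambda>_. r"] unfolding Z_def by (auto simp: PiE_iff extensional_def)
  qed
  finally show "integral\<^sup>L (PiM UNIV (\<lambda>_. measure_pmf r)) (\<lambda>x. F (restrict x D))
          = measure_pmf.expectation (Pi_pmf D undefined (\<lambda>_. r)) F" unfolding M_def .
qed



lemma restrict_UNIV_id [simp]: "restrict f UNIV = f"
  by (simp add: restrict_def)

lemma shiftZ_measurable: "shiftZ u \<in> measurable (iid p) (iid p)"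
proof -
  have "(\<lambda>x. \<lambda>v\<in>UNIV. x (\<lambda>i. v i + u i)) \<in> measurable (iid p) (iid p)"
    unfolding iid_def by (intro measurable_restrict measurable_component_singleton) auto
  then show ?thesis unfolding shiftZ_def by simp
qed

lemma iid_shift: "distr (iid p) (iid p) (shiftZ (u::'d::finite\<Rightarrow>int)) = iid p"
proof -
  have inj: "inj_on (\<lambda>n::'d\<Rightarrow>int. \<lambda>i. n i + u i) UNIV"
    by (auto simp: inj_on_def fun_eq_iff)
  have "distr (PiM UNIV (\<lambda>_. measure_pmf p)) (\<Pi>\<^sub>M i\<in>UNIV. (\<lambda>_. measure_pmf p) ((\<lambda>n. \<lambda>i. n i + u i) i))
          (\<lambda>\<omega>. \<lambda>n\<in>UNIV. \<omega> ((\<lambda>n. \<lambda>i. n i + u i) n)) = (\<Pi>\<^sub>M i\<in>UNIV. (\<lambda>_. measure_pmf p) ((\<lambda>n. \<lambda>i. n i + u i) i))"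
    by (rule distr_PiM_reindex) (auto simp: inj measure_pmf.prob_space_axioms)
  then show ?thesis unfolding iid_def shiftZ_def by simp
qed

lemma AE_iid_shift:
  assumes "AE x in iid p. P x"
  shows "AE x in iid p. P (shiftZ (u::'d::finite\<Rightarrow>int) x)"
  by (rule AE_distrD[OF shiftZ_measurable]) (subst iid_shift, rule assms)

lemma var_sum_Pi:
  fixes r :: "'c::finite pmf" and g :: "'c \<Rightarrow> real" and P :: "'i set"
  assumes P: "finite P" and m0: "measure_pmf.expectation r g = 0"
  shows "measure_pmf.expectation (Pi_pmf P undefined (\<lambda>_. r)) (\<lambda>y. (\<Sum>u\<in>P. g (y u))\<^sup>2)
          = real (card P) * measure_pmf.expectation r (\<lambda>a. (g a)\<^sup>2)"
proof -
  let ?Q = "Pi_pmf P undefined (\<lambda>_. r)"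
  have finQ: "finite (set_pmf ?Q)"
    by (rule finite_subset[OF set_Pi_pmf_subset'[OF P]]) (auto intro!: finite_PiE_dflt P)
  have intQ: "integrable (measure_pmf ?Q) h" for h :: "_ \<Rightarrow> real"
    by (rule integrable_measure_pmf_finite[OF finQ])
  have comp: "measure_pmf.expectation ?Q (\<lambda>y. h (y u)) = measure_pmf.expectation r h" if "u \<in> P" for u and h :: "'c \<Rightarrow> real"
  proof -
    have "map_pmf (\<lambda>y. y u) ?Q = r" using that P by (subst Pi_pmf_component) auto
    then show ?thesis by (metis integral_map_pmf)
  qed
  have off: "measure_pmf.expectation ?Q (\<lambda>y. g (y u) * g (y v)) = 0" if "u \<in> P" "v \<in> P" "u \<noteq> v" for u v
  proof -
    have ind0: "prob_space.indep_vars (measure_pmf ?Q) (\<lambda>_. count_space UNIV) (\<lambda>x f. f x) P"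
      by (rule indep_vars_Pi_pmf[OF P])
    have ind1: "prob_space.indep_vars (measure_pmf ?Q) (\<lambda>_. count_space UNIV) (\<lambda>x f. f x) {u, v}"
      by (rule prob_space.indep_vars_subset[OF measure_pmf.prob_space_axioms ind0]) (use that in auto)
    have ind: "prob_space.indep_vars (measure_pmf ?Q) (\<lambda>_. borel) (\<lambda>i y. g (y i)) {u, v}"
      by (rule prob_space.indep_vars_compose2[OF measure_pmf.prob_space_axioms ind1]) auto
    have "measure_pmf.expectation ?Q (\<lambda>y. \<Prod>i\<in>{u,v}. g (y i)) = (\<Prod>i\<in>{u,v}. measure_pmf.expectation ?Q (\<lambda>y. g (y i)))"
      by (rule prob_space.indep_vars_lebesgue_integral[OF measure_pmf.prob_space_axioms]) (auto simp: ind intQ)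
    also have "\<dots> = 0" using that by (simp add: comp m0)
    finally show ?thesis using that by simp
  qed
  have sq: "(\<Sum>u\<in>P. g (y u))\<^sup>2 = (\<Sum>u\<in>P. \<Sum>v\<in>P. g (y u) * g (y v))" for y
    by (simp add: power2_eq_square sum_product)
  have "measure_pmf.expectation ?Q (\<lambda>y. (\<Sum>u\<in>P. g (y u))\<^sup>2)
      = (\<Sum>u\<in>P. \<Sum>v\<in>P. measure_pmf.expectation ?Q (\<lambda>y. g (y u) * g (y v)))"
    unfolding sq by (simp add: Bochner_Integration.integral_sum intQ)
  also have "\<dots> = (\<Sum>u\<in>P. measure_pmf.expectation r (\<lambda>a. (g a)\<^sup>2))"
  proof (intro sum.cong refl)
    fix u assume u: "u \<in> P"
    have "(\<Sum>v\<in>P. measure_pmf.expectation ?Q (\<lambda>y. g (y u) * g (y v)))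
        = (\<Sum>v\<in>{u}. measure_pmf.expectation ?Q (\<lambda>y. g (y u) * g (y v)))"
      by (rule sum.mono_neutral_right[OF P]) (use u off in auto)
    also have "\<dots> = measure_pmf.expectation r (\<lambda>a. (g a)\<^sup>2)"
      using comp[OF u, of "\<lambda>a. (g a)\<^sup>2"] by (simp add: power2_eq_square)
    finally show "(\<Sum>v\<in>P. measure_pmf.expectation ?Q (\<lambda>y. g (y u) * g (y v))) = measure_pmf.expectation r (\<lambda>a. (g a)\<^sup>2)" .
  qed
  also have "\<dots> = real (card P) * measure_pmf.expectation r (\<lambda>a. (g a)\<^sup>2)" by simp
  finally show ?thesis .
qed



lemma std_normal_pos_part:
  "integral\<^sup>L std_normal_distribution (\<lambda>z. max z 0) = 1 / sqrt (2 * pi)"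
proof -
  have i1: "integrable lborel (\<lambda>x. std_normal_density x * \<bar>x\<bar>)"
    using integrable.intros[OF std_normal_moment_abs_odd[of 0]] by simp
  have v1: "integral\<^sup>L lborel (\<lambda>x. std_normal_density x * \<bar>x\<bar>) = sqrt (2/pi)"
    using integral_std_normal_moment_abs_odd[of 0] by simp
  have i2: "integrable lborel (\<lambda>x. std_normal_density x * x)"
    using integrable.intros[OF std_normal_moment_odd[of 0]] by simp
  have v2: "integral\<^sup>L lborel (\<lambda>x. std_normal_density x * x) = 0"
    using integral_std_normal_moment_odd[of 0] by simp
  have eq: "std_normal_density x * max x 0 = (std_normal_density x * \<bar>x\<bar> + std_normal_density x * x) / 2" for x
    by (auto simp: max_def algebra_simps)
  have "integral\<^sup>L std_normal_distribution (\<lambda>z. max z 0) = integral\<^sup>L lborel (\<lambda>x. std_normal_density x * max x 0)"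
    by (subst integral_density) (auto simp: normal_density_nonneg)
  also have "\<dots> = (integral\<^sup>L lborel (\<lambda>x. std_normal_density x * \<bar>x\<bar>) + integral\<^sup>L lborel (\<lambda>x. std_normal_density x * x)) / 2"
    unfolding eq using i1 i2 by simp
  also have "\<dots> = sqrt (2/pi) / 2" using v1 v2 by simp
  also have "\<dots> = 1 / sqrt (2 * pi)"
    by (simp add: real_sqrt_divide field_simps real_sqrt_mult)
  finally show ?thesis .
qed

lemma pos_part_tail:
  fixes K z :: real assumes "K > 0"
  shows "0 \<le> max z 0 - min (max z 0) K" "max z 0 - min (max z 0) K \<le> z\<^sup>2 / K"
proof -
  show "0 \<le> max z 0 - min (max z 0) K" by simp
  show "max z 0 - min (max z 0) K \<le> z\<^sup>2 / K"
  proof (cases "z \<le> K")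
    case True then show ?thesis using assms by (auto simp: max_def min_def)
  next
    case False
    have z1: "1 \<le> z / K" using False assms by simp
    have "z * 1 \<le> z * (z / K)" by (rule mult_left_mono[OF z1]) (use False assms in auto)
    then have "z - K \<le> z * (z / K)" using assms by simp
    then show ?thesis using False assms by (simp add: max_def min_def power2_eq_square)
  qed
qed

lemma pos_part_trunc_bound:
  fixes N :: "real measure" and K B :: real
  assumes N: "real_distribution N" and K: "K > 0"
    and int2: "integrable N (\<lambda>z. z\<^sup>2)" and B: "integral\<^sup>L N (\<lambda>z. z\<^sup>2) \<le> B"
  shows "integrable N (\<lambda>z. max z 0)"
    and "\<bar>integral\<^sup>L N (\<lambda>z. max z 0) - integral\<^sup>L N (\<lambda>z. min (max z 0) K)\<bar> \<le> B / K"
proof -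
  interpret real_distribution N by fact
  have ib: "integrable N (\<lambda>z. min (max z 0) K)"
    using K by (intro integrable_const_bound[where B=K]) auto
  show im: "integrable N (\<lambda>z. max z 0)"
  proof (rule Bochner_Integration.integrable_bound[where f="\<lambda>z. 1 + z\<^sup>2"])
    show "integrable N (\<lambda>z. 1 + z\<^sup>2)" using int2 by simp
    show "AE x in N. norm (max x 0) \<le> norm (1 + x\<^sup>2)"
    proof (rule AE_I2)
      fix x :: real
      have "0 \<le> (\<bar>x\<bar> - 1)\<^sup>2" by simp
      then have "\<bar>x\<bar> \<le> 1 + x\<^sup>2" by (simp add: power2_eq_square algebra_simps abs_mult_self_eq)
      then show "norm (max x 0) \<le> norm (1 + x\<^sup>2)" by (auto simp: max_def)
    qed
  qed auto
  have "integral\<^sup>L N (\<lambda>z. max z 0) - integral\<^sup>L N (\<lambda>z. min (max z 0) K) = integral\<^sup>L N (\<lambda>z. max z 0 - min (max z 0) K)"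
    using im ib by simp
  also have "\<dots> \<le> integral\<^sup>L N (\<lambda>z. z\<^sup>2 / K)"
    using im ib int2 pos_part_tail[OF K] by (intro integral_mono) auto
  also have "\<dots> = integral\<^sup>L N (\<lambda>z. z\<^sup>2) / K" by simp
  also have "\<dots> \<le> B / K" using B K by (simp add: divide_right_mono)
  finally have up: "integral\<^sup>L N (\<lambda>z. max z 0) - integral\<^sup>L N (\<lambda>z. min (max z 0) K) \<le> B / K" .
  have "0 \<le> integral\<^sup>L N (\<lambda>z. max z 0 - min (max z 0) K)"
    using pos_part_tail[OF K] by (intro integral_nonneg_AE) auto
  then have "0 \<le> integral\<^sup>L N (\<lambda>z. max z 0) - integral\<^sup>L N (\<lambda>z. min (max z 0) K)" using im ib by simp
  show "\<bar>integral\<^sup>L N (\<lambda>z. max z 0) - integral\<^sup>L N (\<lambda>z. min (max z 0) K)\<bar> \<le> B / K"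
  proof -
    have "0 \<le> integral\<^sup>L N (\<lambda>z. z\<^sup>2)" by (intro integral_nonneg_AE) auto
    then have "0 \<le> B" using B by linarith
    then have "0 \<le> B / K" using K by simp
    then show ?thesis using up \<open>0 \<le> integral\<^sup>L N (\<lambda>z. max z 0) - integral\<^sup>L N (\<lambda>z. min (max z 0) K)\<close>
      unfolding abs_le_iff by linarith
  qed
qed

lemma weak_conv_pos_part:
  fixes \<mu> :: "nat \<Rightarrow> real measure" and M :: "real measure"
  assumes \<mu>: "\<And>n. real_distribution (\<mu> n)" and M: "real_distribution M"
    and wc: "weak_conv_m \<mu> M"
    and i\<mu>: "\<And>n. integrable (\<mu> n) (\<lambda>z. z\<^sup>2)" and b\<mu>: "\<And>n. integral\<^sup>L (\<mu> n) (\<lambda>z. z\<^sup>2) \<le> B"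
    and iM: "integrable M (\<lambda>z. z\<^sup>2)" and bM: "integral\<^sup>L M (\<lambda>z. z\<^sup>2) \<le> B"
  shows "(\<lambda>n. integral\<^sup>L (\<mu> n) (\<lambda>z. max z 0)) \<longlonglongrightarrow> integral\<^sup>L M (\<lambda>z. max z 0)"
proof (rule LIMSEQ_I)
  fix e :: real assume e: "0 < e"
  define K where "K = 3 * (\<bar>B\<bar> + 1) / e"
  have K: "K > 0" using e by (simp add: K_def)
  have BK: "B / K < e / 3"
  proof -
    have "B / K \<le> \<bar>B\<bar> / K" using K by (simp add: divide_right_mono)
    also have "\<bar>B\<bar> / K = \<bar>B\<bar> * e / (3 * (\<bar>B\<bar> + 1))" using e by (simp add: K_def)
    also have "\<dots> < e / 3" using e by (simp add: field_simps)
    finally show ?thesis .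
  qed
  have conv: "(\<lambda>n. integral\<^sup>L (\<mu> n) (\<lambda>z. min (max z 0) K)) \<longlonglongrightarrow> integral\<^sup>L M (\<lambda>z. min (max z 0) K)"
    by (rule weak_conv_imp_integral_bdd_continuous_conv[OF \<mu> M wc, where B=K])
       (use K in \<open>auto intro!: continuous_intros\<close>)
  obtain n0 where n0: "\<And>n. n \<ge> n0 \<Longrightarrow> norm (integral\<^sup>L (\<mu> n) (\<lambda>z. min (max z 0) K) - integral\<^sup>L M (\<lambda>z. min (max z 0) K)) < e / 3"
    using LIMSEQ_D[OF conv, of "e/3"] e by auto
  show "\<exists>no. \<forall>n\<ge>no. norm (integral\<^sup>L (\<mu> n) (\<lambda>z. max z 0) - integral\<^sup>L M (\<lambda>z. max z 0)) < e"
  proof (intro exI allI impI)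
    fix n assume "n \<ge> n0"
    note a = n0[OF this]
    note b = pos_part_trunc_bound(2)[OF \<mu> K i\<mu> b\<mu>, of n]
    note c = pos_part_trunc_bound(2)[OF M K iM bM]
    show "norm (integral\<^sup>L (\<mu> n) (\<lambda>z. max z 0) - integral\<^sup>L M (\<lambda>z. max z 0)) < e"
      using a b c BK unfolding real_norm_def abs_le_iff abs_less_iff by linarith
  qed
qed



lemma pmf_finite_integrable: "integrable (measure_pmf (r :: 'c::finite pmf)) (h :: 'c \<Rightarrow> real)"
  by (rule integrable_measure_pmf_finite) simp

lemma pim_comp:
  fixes r :: "'c::finite pmf" and h :: "'c \<Rightarrow> real" and i :: 'i
  shows "integral\<^sup>L (PiM UNIV (\<lambda>_. measure_pmf r)) (\<lambda>x. h (x i)) = measure_pmf.expectation r h"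
    and "integrable (PiM UNIV (\<lambda>_. measure_pmf r)) (\<lambda>x. h (x i))"
    and "(\<lambda>x. h (x i)) \<in> borel_measurable (PiM UNIV (\<lambda>_. measure_pmf r))"
proof -
  have eq: "(\<lambda>x. h (x i)) = (\<lambda>x. (\<lambda>y. h (y i)) (restrict x {i}))" by simp
  have "integral\<^sup>L (PiM UNIV (\<lambda>_. measure_pmf r)) (\<lambda>x. h (x i))
      = measure_pmf.expectation (Pi_pmf {i} undefined (\<lambda>_. r)) (\<lambda>y. h (y i))"
    by (subst eq, rule pim_restrict(2)) simp
  also have "\<dots> = measure_pmf.expectation (map_pmf (\<lambda>y. y i) (Pi_pmf {i} undefined (\<lambda>_. r))) h"
    by simp
  also have "map_pmf (\<lambda>y. y i) (Pi_pmf {i} undefined (\<lambda>_. r)) = r"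
    by (subst Pi_pmf_component) auto
  finally show "integral\<^sup>L (PiM UNIV (\<lambda>_. measure_pmf r)) (\<lambda>x. h (x i)) = measure_pmf.expectation r h" .
  show "integrable (PiM UNIV (\<lambda>_. measure_pmf r)) (\<lambda>x. h (x i))"
    by (subst eq, rule pim_restrict(3)) simp
  show "(\<lambda>x. h (x i)) \<in> borel_measurable (PiM UNIV (\<lambda>_. measure_pmf r))"
    by (subst eq, rule pim_restrict(1)) simp
qed

lemma max_cmult: "c \<ge> 0 \<Longrightarrow> max (c * z) 0 = c * max z (0::real)"
  by (cases "z \<le> 0") (auto simp: max_def mult_le_0_iff)

lemma clt_pos:
  fixes r :: "'c::finite pmf" and g :: "'c \<Rightarrow> real"
  assumes m0: "measure_pmf.expectation r g = 0"
  shows "(\<lambda>m. measure_pmf.expectation (Pi_pmf {..<m} undefined (\<lambda>_. r))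
              (\<lambda>x. max ((\<Sum>i<m. g (x i)) / sqrt (real m)) 0))
         \<longlonglongrightarrow> sqrt (measure_pmf.expectation r (\<lambda>a. (g a)\<^sup>2)) / sqrt (2 * pi)"
proof -
  define s2 where "s2 = measure_pmf.expectation r (\<lambda>a. (g a)\<^sup>2)"
  have s2nn: "s2 \<ge> 0" unfolding s2_def by (intro integral_nonneg_AE) auto
  show ?thesis
  proof (cases "s2 = 0")
    case True
    have "AE a in r. (g a)\<^sup>2 = 0"
      using True unfolding s2_def by (subst (asm) integral_nonneg_eq_0_iff_AE) (auto simp: pmf_finite_integrable)
    then have g0: "a \<in> set_pmf r \<Longrightarrow> g a = 0" for a by (simp add: AE_measure_pmf_iff)
    have "measure_pmf.expectation (Pi_pmf {..<m} undefined (\<lambda>_. r))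
              (\<lambda>x. max ((\<Sum>i<m. g (x i)) / sqrt (real m)) 0) = 0" for m
    proof (rule integral_eq_zero_AE, rule AE_pmfI)
      fix x assume "x \<in> set_pmf (Pi_pmf {..<m} undefined (\<lambda>_. r))"
      then have "i < m \<Longrightarrow> x i \<in> set_pmf r" for i by (auto simp: set_Pi_pmf PiE_dflt_def)
      then show "max ((\<Sum>i<m. g (x i)) / sqrt (real m)) 0 = 0" by (simp add: g0)
    qed
    then show ?thesis using True by (simp add: s2_def[symmetric])
  next
    case False
    then have s2pos: "s2 > 0" using s2nn by simp
    define M where "M = PiM (UNIV :: nat set) (\<lambda>_. measure_pmf r)"
    interpret P: prob_space M unfolding M_def by (intro prob_space_PiM) (simp add: measure_pmf.prob_space_axioms)
    define H where "H n y = (\<Sum>i<n. g (y i))" for n and y :: "nat \<Rightarrow> 'c"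
    have Hr: "H n (restrict x {..<n}) = H n x" for n x unfolding H_def by (intro sum.cong) auto
    have Hmeas: "(\<lambda>x. F (H n x)) \<in> borel_measurable M" for F :: "real \<Rightarrow> real" and n
      using pim_restrict(1)[where r=r and D="{..<n}" and F="\<lambda>y. F (H n y)"] unfolding M_def Hr by simp
    have Hint: "integrable M (\<lambda>x. F (H n x))" for F :: "real \<Rightarrow> real" and n
      using pim_restrict(3)[where r=r and D="{..<n}" and F="\<lambda>y. F (H n y)"] unfolding M_def Hr by simp
    have Hexp: "integral\<^sup>L M (\<lambda>x. F (H n x)) = measure_pmf.expectation (Pi_pmf {..<n} undefined (\<lambda>_. r)) (\<lambda>y. F (H n y))" for F :: "real \<Rightarrow> real" and n
      using pim_restrict(2)[where r=r and D="{..<n}" and F="\<lambda>y. F (H n y)"] unfolding M_def Hr by simp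
    have indep0: "P.indep_vars (\<lambda>_. measure_pmf r) (\<lambda>i x. x i) UNIV"
    proof (subst P.indep_vars_iff_distr_eq_PiM)
      show "(\<lambda>x. x i) \<in> measurable M (measure_pmf r)" for i
        unfolding M_def by measurable
      have "distr M (Pi\<^sub>M UNIV (\<lambda>i. measure_pmf r)) (\<lambda>x. \<lambda>i\<in>UNIV. x i) = M"
        unfolding M_def by (simp add: distr_id)
      moreover have "distr M (measure_pmf r) (\<lambda>x. x i) = measure_pmf r" for i
        unfolding M_def by (rule distr_PiM_component) (auto simp: measure_pmf.prob_space_axioms)
      ultimately show "distr M (Pi\<^sub>M UNIV (\<lambda>i. measure_pmf r)) (\<lambda>x. \<lambda>i\<in>UNIV. x i) =
          Pi\<^sub>M UNIV (\<lambda>i. distr M (measure_pmf r) (\<lambda>x. x i))" unfolding M_def by simp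
    qed simp
    have indep: "P.indep_vars (\<lambda>_. borel) (\<lambda>i x. g (x i)) UNIV"
      by (rule P.indep_vars_compose2[OF indep0]) simp
    have gmean: "P.expectation (\<lambda>x. g (x n)) = 0" for n
      unfolding M_def by (simp add: pim_comp m0)
    have gsq: "integrable M (\<lambda>x. (g (x n))\<^sup>2)" for n
      unfolding M_def by (rule pim_comp(2))
    have gvar: "P.variance (\<lambda>x. g (x n)) = (sqrt s2)\<^sup>2" for n
      using s2nn pim_comp(1)[where r=r and h="\<lambda>a. (g a)\<^sup>2" and i=n] unfolding M_def gmean[unfolded M_def] by (simp add: s2_def)
    have gdist: "distr M borel (\<lambda>x. g (x n)) = distr (measure_pmf r) borel g" for n
    proof -
      have "distr M borel (\<lambda>x. g (x n)) = distr (distr M (measure_pmf r) (\<lambda>x. x n)) borel g"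
        unfolding M_def by (subst distr_distr) (auto simp: comp_def intro!: measurable_component_singleton)
      also have "distr M (measure_pmf r) (\<lambda>x. x n) = measure_pmf r"
        unfolding M_def by (rule distr_PiM_component) (auto simp: measure_pmf.prob_space_axioms)
      finally show ?thesis .
    qed
    have clt: "weak_conv_m (\<lambda>n. distr M borel (\<lambda>x. (\<Sum>i<n. g (x i) - 0) / sqrt (n * (sqrt s2)\<^sup>2))) std_normal_distribution"
      by (rule P.central_limit_theorem[OF indep gmean _ gsq gvar gdist]) (use s2pos in simp)
    define Z where "Z n x = H n x / sqrt (n * s2)" for n x
    define \<mu> where "\<mu> n = distr M borel (Z n)" for n
    have wc: "weak_conv_m \<mu> std_normal_distribution"
      using clt s2nn unfolding \<mu>_def Z_def H_def by simp
    have Zmeas: "Z n \<in> borel_measurable M" for n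
      unfolding Z_def using Hmeas[of "\<lambda>t. t / sqrt (n * s2)" n] by simp
    have \<mu>dist: "real_distribution (\<mu> n)" for n
      unfolding \<mu>_def by (rule P.real_distribution_distr[OF Zmeas])
    have \<mu>int: "integrable (\<mu> n) (\<lambda>z. z\<^sup>2)" for n
      unfolding \<mu>_def using Hint[of "\<lambda>t. (t / sqrt (n * s2))\<^sup>2" n]
      by (subst integrable_distr_eq[OF Zmeas]) (auto simp: Z_def)
    have \<mu>mom: "integral\<^sup>L (\<mu> n) (\<lambda>z. z\<^sup>2) \<le> 1" for n
    proof -
      have "integral\<^sup>L (\<mu> n) (\<lambda>z. z\<^sup>2) = integral\<^sup>L M (\<lambda>x. (H n x / sqrt (n * s2))\<^sup>2)"
        unfolding \<mu>_def by (subst integral_distr[OF Zmeas]) (auto simp: Z_def)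
      also have "\<dots> = measure_pmf.expectation (Pi_pmf {..<n} undefined (\<lambda>_. r)) (\<lambda>y. (H n y / sqrt (n * s2))\<^sup>2)"
        by (rule Hexp)
      also have "\<dots> = measure_pmf.expectation (Pi_pmf {..<n} undefined (\<lambda>_. r)) (\<lambda>y. (H n y)\<^sup>2) / (n * s2)"
        using s2nn by (simp add: power_divide)
      also have "\<dots> = n * s2 / (n * s2)"
        unfolding H_def using var_sum_Pi[of "{..<n}" r g] m0 by (simp add: s2_def)
      also have "\<dots> \<le> 1" by simp
      finally show ?thesis .
    qed
    have Nint: "integrable std_normal_distribution (\<lambda>z. z\<^sup>2)"
      using std_normal_distribution_even_moments(2)[of 1] by simp
    have Nmom: "integral\<^sup>L std_normal_distribution (\<lambda>z. z\<^sup>2) \<le> 1"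
      using std_normal_distribution_even_moments(1)[of 1] by simp
    have lim: "(\<lambda>n. integral\<^sup>L (\<mu> n) (\<lambda>z. max z 0)) \<longlonglongrightarrow> 1 / sqrt (2 * pi)"
      using weak_conv_pos_part[OF \<mu>dist real_dist_normal_dist wc \<mu>int \<mu>mom Nint Nmom]
      by (simp add: std_normal_pos_part)
    have eq: "measure_pmf.expectation (Pi_pmf {..<m} undefined (\<lambda>_. r))
              (\<lambda>x. max ((\<Sum>i<m. g (x i)) / sqrt (real m)) 0) = sqrt s2 * integral\<^sup>L (\<mu> m) (\<lambda>z. max z 0)"
      if m: "m \<ge> 1" for m
    proof -
      have "integral\<^sup>L (\<mu> m) (\<lambda>z. max z 0) = integral\<^sup>L M (\<lambda>x. max (H m x / sqrt (m * s2)) 0)"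
        unfolding \<mu>_def by (subst integral_distr[OF Zmeas]) (auto simp: Z_def)
      also have "\<dots> = measure_pmf.expectation (Pi_pmf {..<m} undefined (\<lambda>_. r)) (\<lambda>y. max (H m y / sqrt (m * s2)) 0)"
        by (rule Hexp)
      finally have a: "integral\<^sup>L (\<mu> m) (\<lambda>z. max z 0) = \<dots>" .
      have b: "max ((\<Sum>i<m. g (x i)) / sqrt (real m)) 0 = sqrt s2 * max (H m x / sqrt (m * s2)) 0" for x
      proof -
        have "(\<Sum>i<m. g (x i)) / sqrt (real m) = sqrt s2 * (H m x / sqrt (m * s2))"
          using s2pos m by (simp add: H_def real_sqrt_mult field_simps)
        then show ?thesis using s2nn max_cmult[of "sqrt s2" "H m x / sqrt (real m * s2)"] by simp
      qed
      show ?thesis unfolding a b by simp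
    qed
    have "(\<lambda>m. sqrt s2 * integral\<^sup>L (\<mu> m) (\<lambda>z. max z 0)) \<longlonglongrightarrow> sqrt s2 * (1 / sqrt (2 * pi))"
      by (intro tendsto_mult tendsto_const lim)
    then have "(\<lambda>m. measure_pmf.expectation (Pi_pmf {..<m} undefined (\<lambda>_. r))
              (\<lambda>x. max ((\<Sum>i<m. g (x i)) / sqrt (real m)) 0)) \<longlonglongrightarrow> sqrt s2 * (1 / sqrt (2 * pi))"
      by (rule Lim_transform_eventually) (use eq in \<open>auto simp: eventually_sequentially intro!: exI[of _ 1]\<close>)
    then show ?thesis by (simp add: s2_def)
  qed
qed



lemma pi_bij_sum:
  fixes r :: "'c::finite pmf" and g :: "'c \<Rightarrow> real" and F :: "real \<Rightarrow> real" and P :: "'i set"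
  assumes P: "finite P"
  shows "measure_pmf.expectation (Pi_pmf P undefined (\<lambda>_. r)) (\<lambda>y. F (\<Sum>u\<in>P. g (y u)))
       = measure_pmf.expectation (Pi_pmf {..<card P} undefined (\<lambda>_. r)) (\<lambda>x. F (\<Sum>i<card P. g (x i)))"
proof -
  obtain h0 where h0: "bij_betw h0 P {0..<card P}" using ex_bij_betw_finite_nat[OF P] by blast
  define h where "h x = (if x \<in> P then h0 x else card P)" for x
  have hb: "bij_betw h P {..<card P}"
    using h0 unfolding h_def bij_betw_def inj_on_def by (auto simp: atLeast0LessThan)
  have ho: "x \<notin> P \<Longrightarrow> h x \<notin> {..<card P}" for x by (simp add: h_def)
  have "Pi_pmf P undefined (\<lambda>_. r) = map_pmf (\<lambda>g. g \<circ> h) (Pi_pmf {..<card P} undefined (\<lambda>_. r))"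
    by (rule Pi_pmf_bij_betw[OF P hb ho])
  then have "measure_pmf.expectation (Pi_pmf P undefined (\<lambda>_. r)) (\<lambda>y. F (\<Sum>u\<in>P. g (y u)))
      = measure_pmf.expectation (Pi_pmf {..<card P} undefined (\<lambda>_. r)) (\<lambda>x. F (\<Sum>u\<in>P. g (x (h u))))"
    by simp
  also have "\<dots> = measure_pmf.expectation (Pi_pmf {..<card P} undefined (\<lambda>_. r)) (\<lambda>x. F (\<Sum>i<card P. g (x i)))"
  proof -
    have "(\<Sum>u\<in>P. g (x (h u))) = (\<Sum>i<card P. g (x i))" for x
      using sum.reindex_bij_betw[OF hb, of "\<lambda>i. g (x i)"] by simp
    then show ?thesis by simp
  qed
  finally show ?thesis .
qed

lemma card_torus: "card (torus N :: ('d::finite \<Rightarrow> int) set) = N ^ CARD('d)"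
proof -
  have "torus N = (PiE (UNIV::'d set) (\<lambda>_. {0..<int N}))"
    unfolding torus_def by (auto simp: PiE_iff)
  then show ?thesis by (simp add: card_PiE)
qed

lemma finite_torus: "finite (torus N :: ('d::finite \<Rightarrow> int) set)"
proof -
  have "torus N = (PiE (UNIV::'d set) (\<lambda>_. {0..<int N}))"
    unfolding torus_def by (auto simp: PiE_iff)
  then show ?thesis by (simp add: finite_PiE)
qed

lemma pmf_expectation_finite: "measure_pmf.expectation (p :: 'a::finite pmf) f = (\<Sum>a\<in>UNIV. pmf p a * f a)"
  by (subst integral_measure_pmf_real[where A=UNIV]) (auto simp: mult.commute)

lemma entropy_center:
  fixes p :: "'a::finite pmf"
  shows "measure_pmf.expectation p (\<lambda>a. shannon_entropy p + ln (pmf p a)) = 0"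
    and "measure_pmf.variance p (\<lambda>a. ln (pmf p a)) = measure_pmf.expectation p (\<lambda>a. (shannon_entropy p + ln (pmf p a))\<^sup>2)"
proof -
  have e: "measure_pmf.expectation p (\<lambda>a. ln (pmf p a)) = - shannon_entropy p"
    unfolding shannon_entropy_def pmf_expectation_finite by simp
  show "measure_pmf.expectation p (\<lambda>a. shannon_entropy p + ln (pmf p a)) = 0"
    using e by (simp add: pmf_finite_integrable)
  show "measure_pmf.variance p (\<lambda>a. ln (pmf p a)) = measure_pmf.expectation p (\<lambda>a. (shannon_entropy p + ln (pmf p a))\<^sup>2)"
    unfolding e by (simp add: add.commute)
qed

lemma pow_filterlim: "d \<ge> 1 \<Longrightarrow> filterlim (\<lambda>N::nat. N ^ d) sequentially sequentially"
  unfolding filterlim_at_top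
proof (intro allI)
  fix Z :: nat assume d: "d \<ge> 1"
  show "\<forall>\<^sub>F x in sequentially. Z \<le> x ^ d"
    unfolding eventually_sequentially
  proof (intro exI[of _ "max Z 1"] allI impI)
    fix n assume n: "max Z 1 \<le> n"
    have "n = n ^ 1" by simp
    also have "\<dots> \<le> n ^ d" using n d by (intro power_increasing) auto
    finally show "Z \<le> n ^ d" using n by simp
  qed
qed

lemma part2:
  fixes p :: "'a::finite pmf"
  shows "(\<lambda>N. measure_pmf.expectation (torus_iid N p)
              (\<lambda>xh :: ('d::finite \<Rightarrow> int) \<Rightarrow> 'a. max ((1 / sqrt (real (card (torus N :: ('d \<Rightarrow> int) set))))
                   * (\<Sum>u\<in>torus N. shannon_entropy p + ln (pmf p (xh u)))) 0))
         \<longlonglongrightarrow> sqrt (measure_pmf.variance p (\<lambda>a. ln (pmf p a))) / sqrt (2 * pi)"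
proof -
  define g where "g a = shannon_entropy p + ln (pmf p a)" for a
  define C where "C m = measure_pmf.expectation (Pi_pmf {..<m} undefined (\<lambda>_. p))
              (\<lambda>x. max ((\<Sum>i<m. g (x i)) / sqrt (real m)) 0)" for m
  have clt: "C \<longlonglongrightarrow> sqrt (measure_pmf.expectation p (\<lambda>a. (g a)\<^sup>2)) / sqrt (2 * pi)"
    unfolding C_def by (rule clt_pos) (simp add: g_def entropy_center)
  have "(\<lambda>N. C (N ^ CARD('d))) \<longlonglongrightarrow> sqrt (measure_pmf.expectation p (\<lambda>a. (g a)\<^sup>2)) / sqrt (2 * pi)"
    by (rule filterlim_compose[OF clt pow_filterlim]) simp
  moreover have "measure_pmf.expectation (torus_iid N p)
              (\<lambda>xh :: ('d::finite \<Rightarrow> int) \<Rightarrow> 'a. max ((1 / sqrt (real (card (torus N :: ('d \<Rightarrow> int) set))))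
                   * (\<Sum>u\<in>torus N. shannon_entropy p + ln (pmf p (xh u)))) 0) = C (N ^ CARD('d))" for N
  proof -
    have "measure_pmf.expectation (torus_iid N p)
              (\<lambda>xh :: ('d::finite \<Rightarrow> int) \<Rightarrow> 'a. max ((1 / sqrt (real (card (torus N :: ('d \<Rightarrow> int) set))))
                   * (\<Sum>u\<in>torus N. shannon_entropy p + ln (pmf p (xh u)))) 0)
        = measure_pmf.expectation (Pi_pmf (torus N :: ('d \<Rightarrow> int) set) undefined (\<lambda>_. p))
              (\<lambda>y. (\<lambda>s. max (s / sqrt (real (card (torus N :: ('d \<Rightarrow> int) set)))) 0) (\<Sum>u\<in>torus N. g (y u)))"
      unfolding torus_iid_def g_def by simp
    also have "\<dots> = C (card (torus N :: ('d \<Rightarrow> int) set))"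
      unfolding C_def by (rule pi_bij_sum[OF finite_torus])
    finally show ?thesis by (simp add: card_torus)
  qed
  ultimately show ?thesis by (simp add: g_def entropy_center)
qed



lemma torus_mod_mem: "N > 0 \<Longrightarrow> (\<lambda>i. (w i) mod int N) \<in> torus N"
  unfolding torus_def by auto

lemma torus_shift:
  fixes p :: "'a pmf" and c :: "'d::finite \<Rightarrow> int"
    and \<Phi> :: "(('d \<Rightarrow> int) \<Rightarrow> 'b option) \<Rightarrow> real"
  assumes N: "N > 0"
  shows "measure_pmf.expectation (torus_iid N p) (\<lambda>xh. \<Phi> (\<lambda>u. torus_code f N n xh (\<lambda>i. (u i + c i) mod int N)))
       = measure_pmf.expectation (torus_iid N p) (\<lambda>xh. \<Phi> (torus_code f N n xh))"
proof -
  define \<tau> where "\<tau> u = (\<lambda>i. (u i + c i) mod int N)" for u :: "'d \<Rightarrow> int"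
  define \<tau>' where "\<tau>' u = (\<lambda>i. (u i - c i) mod int N)" for u :: "'d \<Rightarrow> int"
  define h where "h w = (if w \<in> torus N then \<tau> w else w)" for w
  define h' where "h' w = (if w \<in> torus N then \<tau>' w else w)" for w
  have tm: "\<tau> u \<in> torus N" "\<tau>' u \<in> torus N" for u
    unfolding \<tau>_def \<tau>'_def using N by (auto simp: torus_def)
  have mm: "x \<in> torus N \<Longrightarrow> x i mod int N = x i" for x i
    unfolding torus_def by auto
  have hb: "bij_betw h (torus N) (torus N)"
  proof (rule bij_betw_byWitness[where f'=h'])
    show "\<forall>a\<in>torus N. h' (h a) = a"
      using tm mm by (auto simp: h_def h'_def \<tau>_def \<tau>'_def mod_diff_left_eq fun_eq_iff)
    show "\<forall>a\<in>torus N. h (h' a) = a"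
      using tm mm by (auto simp: h_def h'_def \<tau>_def \<tau>'_def mod_add_left_eq fun_eq_iff)
    show "h ` torus N \<subseteq> torus N" using tm by (auto simp: h_def)
    show "h' ` torus N \<subseteq> torus N" using tm by (auto simp: h'_def)
  qed
  have ho: "x \<notin> torus N \<Longrightarrow> h x \<notin> torus N" for x by (simp add: h_def)
  have pm: "torus_iid N p = map_pmf (\<lambda>g. g \<circ> h) (torus_iid N p)"
    unfolding torus_iid_def by (rule Pi_pmf_bij_betw[OF finite_torus hb ho])
  have key: "torus_code f N n (xh \<circ> h) = (\<lambda>u. torus_code f N n xh (\<tau> u))" for xh
  proof
    fix u
    have "(\<lambda>v. (xh \<circ> h) (\<lambda>i. (v i + u i) mod int N)) = (\<lambda>v. xh (\<lambda>i. (v i + \<tau> u i) mod int N))"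
    proof
      fix v
      have "(\<lambda>i. (v i + u i) mod int N) \<in> torus N" by (rule torus_mod_mem[OF N])
      then have "(xh \<circ> h) (\<lambda>i. (v i + u i) mod int N) = xh (\<tau> (\<lambda>i. (v i + u i) mod int N))"
        by (simp add: h_def)
      also have "\<tau> (\<lambda>i. (v i + u i) mod int N) = (\<lambda>i. (v i + \<tau> u i) mod int N)"
        unfolding \<tau>_def by (auto simp: fun_eq_iff mod_add_left_eq mod_add_right_eq add.assoc)
      finally show "(xh \<circ> h) (\<lambda>i. (v i + u i) mod int N) = xh (\<lambda>i. (v i + \<tau> u i) mod int N)" .
    qed
    then show "torus_code f N n (xh \<circ> h) u = torus_code f N n xh (\<tau> u)"
      unfolding torus_code_def by simp
  qed
  have "measure_pmf.expectation (torus_iid N p) (\<lambda>xh. \<Phi> (torus_code f N n xh))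
      = measure_pmf.expectation (map_pmf (\<lambda>g. g \<circ> h) (torus_iid N p)) (\<lambda>xh. \<Phi> (torus_code f N n xh))"
    using pm by simp
  also have "\<dots> = measure_pmf.expectation (torus_iid N p) (\<lambda>xh. \<Phi> (\<lambda>u. torus_code f N n xh (\<tau> u)))"
    by (simp add: key)
  finally show ?thesis by (simp add: \<tau>_def)
qed

definition I0 :: "nat \<Rightarrow> nat \<Rightarrow> ('d::finite \<Rightarrow> int) set" where
  "I0 N n = {u. \<forall>i. int n \<le> u i \<and> u i + int n < int N}"

lemma coupling_law:
  fixes p :: "'a::finite pmf" and f :: "nat \<Rightarrow> (('d::finite \<Rightarrow> int) \<Rightarrow> 'a) \<Rightarrow> 'b option"
    and \<Phi> :: "(('d \<Rightarrow> int) \<Rightarrow> 'b option) \<Rightarrow> real"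
  assumes N: "N > 0" and Q: "Q \<subseteq> I0 N n"
  defines "W x \<equiv> restrict (\<lambda>u. f n (restrict (shiftZ u x) (cube n))) Q"
  shows "measure_pmf.expectation (torus_iid N p) (\<lambda>xh. \<Phi> (restrict (torus_code f N n xh) Q))
           = integral\<^sup>L (iid p) (\<lambda>x. \<Phi> (W x))"
    and "integrable (iid p) (\<lambda>x. \<Phi> (W x))"
    and "(\<lambda>x. \<Phi> (W x)) \<in> borel_measurable (iid p)"
proof -
  define G where "G z = \<Phi> (restrict (\<lambda>u. f n (restrict (\<lambda>v. z (\<lambda>i. v i + u i)) (cube n))) Q)"
    for z :: "('d \<Rightarrow> int) \<Rightarrow> 'a"
  have inT: "(\<lambda>i. v i + u i) \<in> torus N" if "u \<in> Q" "v \<in> cube n" for u v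
  proof -
    have "0 \<le> v i + u i \<and> v i + u i < int N" for i :: 'd
    proof -
      have "int n \<le> u i \<and> u i + int n < int N" using that Q by (auto simp: I0_def)
      moreover have "- int n \<le> v i \<and> v i \<le> int n" using that by (auto simp: cube_def)
      ultimately show ?thesis by linarith
    qed
    then show ?thesis unfolding torus_def by auto
  qed
  have G1: "G (restrict x (torus N)) = \<Phi> (W x)" for x
  proof -
    have "restrict (\<lambda>u. f n (restrict (\<lambda>v. restrict x (torus N) (\<lambda>i. v i + u i)) (cube n))) Q
        = restrict (\<lambda>u. f n (restrict (shiftZ u x) (cube n))) Q"
    proof (rule restrict_ext)
      fix u assume u: "u \<in> Q"
      have "restrict (\<lambda>v. restrict x (torus N) (\<lambda>i. v i + u i)) (cube n) = restrict (shiftZ u x) (cube n)"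
        using inT[OF u] by (auto simp: restrict_def shiftZ_def fun_eq_iff)
      then show "f n (restrict (\<lambda>v. restrict x (torus N) (\<lambda>i. v i + u i)) (cube n)) = f n (restrict (shiftZ u x) (cube n))"
        by simp
    qed
    then show ?thesis unfolding G_def W_def by simp
  qed
  have G2: "G xh = \<Phi> (restrict (torus_code f N n xh) Q)" for xh
  proof -
    have "restrict (\<lambda>u. f n (restrict (\<lambda>v. xh (\<lambda>i. v i + u i)) (cube n))) Q = restrict (torus_code f N n xh) Q"
    proof (rule restrict_ext)
      fix u assume u: "u \<in> Q"
      have "restrict (\<lambda>v. xh (\<lambda>i. v i + u i)) (cube n) = restrict (\<lambda>v. xh (\<lambda>i. (v i + u i) mod int N)) (cube n)"
      proof (rule restrict_ext)
        fix v :: "'d \<Rightarrow> int" assume "v \<in> cube n"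
        then have "(\<lambda>i. v i + u i) \<in> torus N" using inT u by blast
        then have "(\<lambda>i. (v i + u i) mod int N) = (\<lambda>i. v i + u i)" unfolding torus_def by auto
        then show "xh (\<lambda>i. v i + u i) = xh (\<lambda>i. (v i + u i) mod int N)" by simp
      qed
      then show "f n (restrict (\<lambda>v. xh (\<lambda>i. v i + u i)) (cube n)) = torus_code f N n xh u"
        unfolding torus_code_def by simp
    qed
    then show ?thesis unfolding G_def by simp
  qed
  have eqf: "(\<lambda>x. \<Phi> (W x)) = (\<lambda>x. G (restrict x (torus N)))" using G1 by simp
  show "(\<lambda>x. \<Phi> (W x)) \<in> borel_measurable (iid p)"
    unfolding eqf iid_def by (rule pim_restrict(1)[OF finite_torus])
  show "integrable (iid p) (\<lambda>x. \<Phi> (W x))"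
    unfolding eqf iid_def by (rule pim_restrict(3)[OF finite_torus])
  have "integral\<^sup>L (iid p) (\<lambda>x. \<Phi> (W x)) = measure_pmf.expectation (Pi_pmf (torus N) undefined (\<lambda>_. p)) G"
    unfolding eqf iid_def by (rule pim_restrict(2)[OF finite_torus])
  also have "\<dots> = measure_pmf.expectation (torus_iid N p) (\<lambda>xh. \<Phi> (restrict (torus_code f N n xh) Q))"
    unfolding torus_iid_def G2 by simp
  finally show "measure_pmf.expectation (torus_iid N p) (\<lambda>xh. \<Phi> (restrict (torus_code f N n xh) Q))
           = integral\<^sup>L (iid p) (\<lambda>x. \<Phi> (W x))" by simp
qed

lemma ae_window:
  fixes p :: "'a::finite pmf" and q :: "'b::finite pmf" and \<phi> :: "(('d::finite \<Rightarrow> int) \<Rightarrow> 'a) \<Rightarrow> (('d \<Rightarrow> int) \<Rightarrow> 'b)"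
  assumes hom: "is_homomorphism p q \<phi>"
    and local_fn: "\<forall>n. AE x in iid p. trunc_code p \<phi> n x = f n (restrict x (cube n))"
    and Q: "finite Q"
  shows "AE x in iid p. \<forall>u\<in>Q. f n (restrict (shiftZ u x) (cube n))
            = (if coding_radius p \<phi> (shiftZ u x) \<le> enat n then Some (\<phi> x u) else None)"
proof (rule eventually_ball_finite[OF Q], intro ballI)
  fix u assume "u \<in> Q"
  have a1: "AE x in iid p. trunc_code p \<phi> n (shiftZ u x) = f n (restrict (shiftZ u x) (cube n))"
    by (rule AE_iid_shift) (use local_fn in blast)
  have a2: "AE x in iid p. \<phi> (shiftZ u x) = shiftZ u (\<phi> x)"
    using hom unfolding is_homomorphism_def by blast
  show "AE x in iid p. f n (restrict (shiftZ u x) (cube n))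
            = (if coding_radius p \<phi> (shiftZ u x) \<le> enat n then Some (\<phi> x u) else None)"
    using a1 a2
  proof eventually_elim
    case (elim x)
    have e1: "\<phi> (shiftZ u x) (\<lambda>_. 0) = \<phi> x u" using elim(2) by (simp add: shiftZ_def)
    have e2: "f n (restrict (shiftZ u x) (cube n)) = trunc_code p \<phi> n (shiftZ u x)" using elim(1) by simp
    show ?case unfolding e2 trunc_code_def e1 ..
  qed
qed

lemma law_S:
  fixes p :: "'a::finite pmf" and q :: "'b::finite pmf" and \<phi> :: "(('d::finite \<Rightarrow> int) \<Rightarrow> 'a) \<Rightarrow> (('d \<Rightarrow> int) \<Rightarrow> 'b)"
    and F :: "real \<Rightarrow> real" and g :: "'b \<Rightarrow> real"
  assumes hom: "is_homomorphism p q \<phi>" and Q: "finite Q"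
  shows "integral\<^sup>L (iid p) (\<lambda>x. F (\<Sum>u\<in>Q. g (\<phi> x u)))
          = measure_pmf.expectation (Pi_pmf {..<card Q} undefined (\<lambda>_. q)) (\<lambda>y. F (\<Sum>i<card Q. g (y i)))"
    and "integrable (iid p) (\<lambda>x. F (\<Sum>u\<in>Q. g (\<phi> x u)))"
    and "(\<lambda>x. F (\<Sum>u\<in>Q. g (\<phi> x u))) \<in> borel_measurable (iid p)"
proof -
  have m: "\<phi> \<in> measurable (iid p) (iid q)" and d: "distr (iid p) (iid q) \<phi> = iid q"
    using hom unfolding is_homomorphism_def by auto
  define G where "G y = F (\<Sum>u\<in>Q. g (y u))" for y :: "('d \<Rightarrow> int) \<Rightarrow> 'b"
  have Gr: "G (restrict y Q) = G y" for y unfolding G_def by (intro arg_cong[where f=F] sum.cong) auto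
  have Gm: "G \<in> borel_measurable (iid q)"
    using pim_restrict(1)[OF Q, where F=G and r=q] unfolding Gr iid_def by simp
  have Gi: "integrable (iid q) G"
    using pim_restrict(3)[OF Q, where F=G and r=q] unfolding Gr iid_def by simp
  have Ge: "integral\<^sup>L (iid q) G = measure_pmf.expectation (Pi_pmf Q undefined (\<lambda>_. q)) G"
    using pim_restrict(2)[OF Q, where F=G and r=q] unfolding Gr iid_def by simp
  show "(\<lambda>x. F (\<Sum>u\<in>Q. g (\<phi> x u))) \<in> borel_measurable (iid p)"
    using measurable_comp[OF m Gm] by (simp add: G_def comp_def)
  show "integrable (iid p) (\<lambda>x. F (\<Sum>u\<in>Q. g (\<phi> x u)))"
    using Gi integrable_distr_eq[OF m Gm] d by (simp add: G_def)
  have "integral\<^sup>L (iid p) (\<lambda>x. F (\<Sum>u\<in>Q. g (\<phi> x u))) = integral\<^sup>L (distr (iid p) (iid q) \<phi>) G"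
    by (subst integral_distr[OF m Gm]) (simp add: G_def)
  also have "\<dots> = measure_pmf.expectation (Pi_pmf Q undefined (\<lambda>_. q)) G" using d Ge by simp
  also have "\<dots> = measure_pmf.expectation (Pi_pmf {..<card Q} undefined (\<lambda>_. q)) (\<lambda>y. F (\<Sum>i<card Q. g (y i)))"
    unfolding G_def by (rule pi_bij_sum[OF Q])
  finally show "integral\<^sup>L (iid p) (\<lambda>x. F (\<Sum>u\<in>Q. g (\<phi> x u)))
          = measure_pmf.expectation (Pi_pmf {..<card Q} undefined (\<lambda>_. q)) (\<lambda>y. F (\<Sum>i<card Q. g (y i)))" .
qed



lemma abs_le_sqrt_sq:
  fixes f :: "'x \<Rightarrow> real"
  assumes P: "prob_space M" and i1: "integrable M f" and i2: "integrable M (\<lambda>x. (f x)\<^sup>2)"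
  shows "integral\<^sup>L M (\<lambda>x. \<bar>f x\<bar>) \<le> sqrt (integral\<^sup>L M (\<lambda>x. (f x)\<^sup>2))"
proof -
  interpret prob_space M by fact
  define c where "c = integral\<^sup>L M (\<lambda>x. \<bar>f x\<bar>)"
  have c0: "c \<ge> 0" unfolding c_def by (intro integral_nonneg_AE) auto
  have ia: "integrable M (\<lambda>x. \<bar>f x\<bar>)" using i1 by simp
  have "0 \<le> integral\<^sup>L M (\<lambda>x. (\<bar>f x\<bar> - c)\<^sup>2)" by (intro integral_nonneg_AE) auto
  also have "(\<lambda>x. (\<bar>f x\<bar> - c)\<^sup>2) = (\<lambda>x. (f x)\<^sup>2 - 2 * c * \<bar>f x\<bar> + c\<^sup>2)"
    by (auto simp: power2_eq_square algebra_simps)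
  also have "integral\<^sup>L M \<dots> = integral\<^sup>L M (\<lambda>x. (f x)\<^sup>2) - 2 * c * c + c\<^sup>2"
    using ia i2 prob_space by (simp add: c_def)
  finally have "c\<^sup>2 \<le> integral\<^sup>L M (\<lambda>x. (f x)\<^sup>2)" by (simp add: power2_eq_square)
  then show ?thesis unfolding c_def[symmetric] by (rule real_le_rsqrt)
qed

lemma sum_if_const: "finite A \<Longrightarrow> (\<Sum>u\<in>A. if P u then (c::real) else 0) = c * real (card {u\<in>A. P u})"
  by (simp add: sum.If_cases Int_def)

lemma max_div_diff: "(s::real) > 0 \<Longrightarrow> \<bar>max (a / s) 0 - max (b / s) 0\<bar> \<le> \<bar>a - b\<bar> / s"
  by (auto simp: max_def field_simps abs_le_iff)

lemma coupling_bounds: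
  fixes p :: "'a::finite pmf" and q :: "'b::finite pmf"
    and \<phi> :: "(('d::finite \<Rightarrow> int) \<Rightarrow> 'a) \<Rightarrow> (('d \<Rightarrow> int) \<Rightarrow> 'b)"
    and f :: "nat \<Rightarrow> (('d \<Rightarrow> int) \<Rightarrow> 'a) \<Rightarrow> 'b option" and gq :: "'b \<Rightarrow> real"
  assumes hom: "is_homomorphism p q \<phi>"
    and local_fn: "\<forall>n. AE x in iid p. trunc_code p \<phi> n x = f n (restrict x (cube n))"
    and N: "N > 0" and Q: "Q \<subseteq> I0 N n" and finQ: "finite Q"
    and Cq: "\<And>b. \<bar>gq b\<bar> \<le> Cq" and m0: "measure_pmf.expectation q gq = 0"
  defines "a \<equiv> (\<lambda>ob. case ob of None \<Rightarrow> 0 | Some b \<Rightarrow> gq b)"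
  defines "T \<equiv> (\<lambda>xh. \<Sum>u\<in>Q. a (torus_code f N n xh u))"
    and "K \<equiv> (\<lambda>xh. real (card {u\<in>Q. torus_code f N n xh u = None}))"
  shows "measure_pmf.expectation (torus_iid N p) (\<lambda>xh. \<bar>T xh\<bar>)
           \<le> sqrt (real (card Q) * measure_pmf.expectation q (\<lambda>b. (gq b)\<^sup>2)) + Cq * measure_pmf.expectation (torus_iid N p) K"
    and "s > 0 \<Longrightarrow> \<bar>measure_pmf.expectation (torus_iid N p) (\<lambda>xh. max (T xh / s) 0)
            - measure_pmf.expectation (Pi_pmf {..<card Q} undefined (\<lambda>_. q)) (\<lambda>y. max ((\<Sum>i<card Q. gq (y i)) / s) 0)\<bar>
           \<le> Cq * measure_pmf.expectation (torus_iid N p) K / s"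
proof -
  define W where "W x = restrict (\<lambda>u. f n (restrict (shiftZ u x) (cube n))) Q" for x
  define Ta where "Ta w = (\<Sum>u\<in>Q. a (w u))" for w :: "('d \<Rightarrow> int) \<Rightarrow> 'b option"
  define Ka where "Ka w = real (card {u\<in>Q. w u = None})" for w :: "('d \<Rightarrow> int) \<Rightarrow> 'b option"
  have Tr: "Ta (restrict w Q) = Ta w" for w unfolding Ta_def by (intro sum.cong) auto
  have Kr: "Ka (restrict w Q) = Ka w" for w
  proof -
    have "{u\<in>Q. restrict w Q u = None} = {u\<in>Q. w u = None}" by auto
    then show ?thesis unfolding Ka_def by simp
  qed
  have TT: "T xh = Ta (restrict (torus_code f N n xh) Q)" for xh unfolding Tr unfolding T_def Ta_def ..
  have KK: "K xh = Ka (restrict (torus_code f N n xh) Q)" for xh unfolding Kr unfolding K_def Ka_def ..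
  note CL = coupling_law[OF N Q, where p=p and f=f, folded W_def]
  define S where "S x = (\<Sum>u\<in>Q. gq (\<phi> x u))" for x
  note LS = law_S[OF hom finQ, where g=gq, folded S_def]
  have ae: "AE x in iid p. \<bar>Ta (W x) - S x\<bar> \<le> Cq * Ka (W x)"
    using ae_window[OF hom local_fn finQ, where n=n]
  proof eventually_elim
    case (elim x)
    have "\<bar>Ta (W x) - S x\<bar> = \<bar>\<Sum>u\<in>Q. a (W x u) - gq (\<phi> x u)\<bar>"
      unfolding Ta_def S_def by (simp add: sum_subtractf)
    also have "\<dots> \<le> (\<Sum>u\<in>Q. \<bar>a (W x u) - gq (\<phi> x u)\<bar>)" by (rule sum_abs)
    also have "\<dots> \<le> (\<Sum>u\<in>Q. if W x u = None then Cq else 0)"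
    proof (rule sum_mono)
      fix u assume u: "u \<in> Q"
      have w: "W x u = (if coding_radius p \<phi> (shiftZ u x) \<le> enat n then Some (\<phi> x u) else None)"
      proof -
        have "W x u = f n (restrict (shiftZ u x) (cube n))" unfolding W_def using u by (rule restrict_apply')
        also note bspec[OF elim u]
        finally show ?thesis .
      qed
      show "\<bar>a (W x u) - gq (\<phi> x u)\<bar> \<le> (if W x u = None then Cq else 0)"
        using Cq[of "\<phi> x u"] by (cases "coding_radius p \<phi> (shiftZ u x) \<le> enat n") (auto simp: w a_def)
    qed
    also have "\<dots> = Cq * Ka (W x)" unfolding Ka_def by (rule sum_if_const[OF finQ])
    finally show ?case .
  qed
  interpret P: prob_space "iid p" unfolding iid_def by (intro prob_space_PiM) (simp add: measure_pmf.prob_space_axioms)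
  have iT: "integrable (iid p) (\<lambda>x. F (Ta (W x)))" for F :: "real \<Rightarrow> real"
    using CL(2)[where \<Phi>="\<lambda>w. F (Ta w)"] by simp
  have iK: "integrable (iid p) (\<lambda>x. Ka (W x))"
    using CL(2)[where \<Phi>="\<lambda>w. Ka w"] by simp
  have iS: "integrable (iid p) (\<lambda>x. F (S x))" for F :: "real \<Rightarrow> real"
    using LS(2)[where F=F] by simp
  have eK: "measure_pmf.expectation (torus_iid N p) K = integral\<^sup>L (iid p) (\<lambda>x. Ka (W x))"
    unfolding KK by (rule CL(1))
  show "measure_pmf.expectation (torus_iid N p) (\<lambda>xh. \<bar>T xh\<bar>)
           \<le> sqrt (real (card Q) * measure_pmf.expectation q (\<lambda>b. (gq b)\<^sup>2)) + Cq * measure_pmf.expectation (torus_iid N p) K"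
  proof -
    have "measure_pmf.expectation (torus_iid N p) (\<lambda>xh. \<bar>T xh\<bar>) = integral\<^sup>L (iid p) (\<lambda>x. \<bar>Ta (W x)\<bar>)"
      unfolding TT by (rule CL(1))
    also have "\<dots> \<le> integral\<^sup>L (iid p) (\<lambda>x. \<bar>S x\<bar> + Cq * Ka (W x))"
    proof (rule integral_mono_AE)
      show "integrable (iid p) (\<lambda>x. \<bar>Ta (W x)\<bar>)" using iT[of abs] by simp
      show "integrable (iid p) (\<lambda>x. \<bar>S x\<bar> + Cq * Ka (W x))" using iS[of abs] iK by simp
      show "AE x in iid p. \<bar>Ta (W x)\<bar> \<le> \<bar>S x\<bar> + Cq * Ka (W x)"
        using ae by eventually_elim linarith
    qed
    also have "\<dots> = integral\<^sup>L (iid p) (\<lambda>x. \<bar>S x\<bar>) + Cq * integral\<^sup>L (iid p) (\<lambda>x. Ka (W x))"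
      using iS[of abs] iK by simp
    also have "integral\<^sup>L (iid p) (\<lambda>x. \<bar>S x\<bar>) \<le> sqrt (integral\<^sup>L (iid p) (\<lambda>x. (S x)\<^sup>2))"
      using abs_le_sqrt_sq[OF P.prob_space_axioms iS[of "\<lambda>t. t"] iS[of "\<lambda>t. t\<^sup>2"]] by simp
    also have "integral\<^sup>L (iid p) (\<lambda>x. (S x)\<^sup>2) = real (card Q) * measure_pmf.expectation q (\<lambda>b. (gq b)\<^sup>2)"
      using LS(1)[where F="\<lambda>t. t\<^sup>2"] var_sum_Pi[of "{..<card Q}" q gq] m0 by simp
    finally show ?thesis using eK by simp
  qed
  assume s: "s > 0"
  show "\<bar>measure_pmf.expectation (torus_iid N p) (\<lambda>xh. max (T xh / s) 0)
            - measure_pmf.expectation (Pi_pmf {..<card Q} undefined (\<lambda>_. q)) (\<lambda>y. max ((\<Sum>i<card Q. gq (y i)) / s) 0)\<bar>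
           \<le> Cq * measure_pmf.expectation (torus_iid N p) K / s"
  proof -
    have e1: "measure_pmf.expectation (torus_iid N p) (\<lambda>xh. max (T xh / s) 0) = integral\<^sup>L (iid p) (\<lambda>x. max (Ta (W x) / s) 0)"
      unfolding TT by (rule CL(1))
    have e2: "measure_pmf.expectation (Pi_pmf {..<card Q} undefined (\<lambda>_. q)) (\<lambda>y. max ((\<Sum>i<card Q. gq (y i)) / s) 0)
        = integral\<^sup>L (iid p) (\<lambda>x. max (S x / s) 0)"
      using LS(1)[where F="\<lambda>t. max (t / s) 0"] by simp
    have "\<bar>integral\<^sup>L (iid p) (\<lambda>x. max (Ta (W x) / s) 0) - integral\<^sup>L (iid p) (\<lambda>x. max (S x / s) 0)\<bar>
        = \<bar>integral\<^sup>L (iid p) (\<lambda>x. max (Ta (W x) / s) 0 - max (S x / s) 0)\<bar>"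
      using iT[of "\<lambda>t. max (t / s) 0"] iS[of "\<lambda>t. max (t / s) 0"] by simp
    also have "\<dots> \<le> integral\<^sup>L (iid p) (\<lambda>x. \<bar>max (Ta (W x) / s) 0 - max (S x / s) 0\<bar>)"
      by (rule integral_abs_bound)
    also have "\<dots> \<le> integral\<^sup>L (iid p) (\<lambda>x. Cq * Ka (W x) / s)"
    proof (rule integral_mono_AE)
      show "integrable (iid p) (\<lambda>x. \<bar>max (Ta (W x) / s) 0 - max (S x / s) 0\<bar>)"
        using iT[of "\<lambda>t. max (t / s) 0"] iS[of "\<lambda>t. max (t / s) 0"] by auto
      show "integrable (iid p) (\<lambda>x. Cq * Ka (W x) / s)" using iK by auto
      show "AE x in iid p. \<bar>max (Ta (W x) / s) 0 - max (S x / s) 0\<bar> \<le> Cq * Ka (W x) / s"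
        using ae
      proof eventually_elim
        case (elim x)
        have "\<bar>max (Ta (W x) / s) 0 - max (S x / s) 0\<bar> \<le> \<bar>Ta (W x) - S x\<bar> / s"
          by (rule max_div_diff[OF s])
        also have "\<dots> \<le> Cq * Ka (W x) / s" using elim s by (simp add: divide_right_mono)
        finally show ?case .
      qed
    qed
    also have "\<dots> = Cq * integral\<^sup>L (iid p) (\<lambda>x. Ka (W x)) / s" by simp
    finally show ?thesis unfolding e1 e2 eK .
  qed
qed



definition cls :: "nat \<Rightarrow> nat \<Rightarrow> ('d::finite \<Rightarrow> int) \<Rightarrow> ('d \<Rightarrow> bool)" where
  "cls N n u = (\<lambda>i. \<not> (int n \<le> u i \<and> u i + int n < int N))"

definition Pe :: "nat \<Rightarrow> nat \<Rightarrow> ('d::finite \<Rightarrow> bool) \<Rightarrow> ('d \<Rightarrow> int) set" where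
  "Pe N n e = {u \<in> torus N. cls N n u = e}"

definition cshift :: "nat \<Rightarrow> ('d::finite \<Rightarrow> bool) \<Rightarrow> ('d \<Rightarrow> int)" where
  "cshift N e = (\<lambda>i. if e i then int (N div 2) else 0)"

definition tau :: "nat \<Rightarrow> ('d::finite \<Rightarrow> bool) \<Rightarrow> ('d \<Rightarrow> int) \<Rightarrow> ('d \<Rightarrow> int)" where
  "tau N e u = (\<lambda>i. (u i + cshift N e i) mod int N)"

lemma sum_partition_Pe:
  "(\<Sum>u\<in>torus N. h u) = (\<Sum>e\<in>UNIV. \<Sum>u\<in>Pe N n e. h u)"
  unfolding Pe_def
  by (rule sum.group[symmetric, OF finite_torus]) auto

lemma I0_torus: "I0 N n \<subseteq> (torus N :: ('d::finite \<Rightarrow> int) set)"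
proof
  fix u :: "'d \<Rightarrow> int" assume "u \<in> I0 N n"
  then have "int n \<le> u i \<and> u i + int n < int N" for i unfolding I0_def by auto
  then have "0 \<le> u i \<and> u i < int N" for i by (smt (verit) of_nat_0_le_iff)
  then show "u \<in> torus N" unfolding torus_def by auto
qed

lemma finite_I0: "finite (I0 N n :: ('d::finite \<Rightarrow> int) set)"
  using finite_subset[OF I0_torus finite_torus] .

lemma Pe_0: "Pe N n (\<lambda>_. False) = I0 N n"
  using I0_torus unfolding Pe_def cls_def I0_def by (auto simp: fun_eq_iff)

lemma Pe_torus: "Pe N n e \<subseteq> torus N" unfolding Pe_def by auto

lemma Pe_disj: "e \<noteq> (\<lambda>_. False) \<Longrightarrow> Pe N n e \<subseteq> torus N - I0 N n"
  unfolding Pe_def cls_def I0_def by (auto simp: fun_eq_iff)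

lemma card_I0: "2 * n \<le> N \<Longrightarrow> card (I0 N n :: ('d::finite \<Rightarrow> int) set) = (N - 2 * n) ^ CARD('d)"
proof -
  assume "2 * n \<le> N"
  have "I0 N n = (PiE (UNIV::'d set) (\<lambda>_. {int n..<int N - int n}))"
    unfolding I0_def by (auto simp: PiE_iff) (metis add.commute less_diff_eq)+
  moreover have "nat (int N - int n - int n) = N - 2 * n" using \<open>2 * n \<le> N\<close> by simp
  ultimately show ?thesis by (simp add: card_PiE)
qed

lemma tau_inj: "N > 0 \<Longrightarrow> inj_on (tau N e) (torus N)"
proof (rule inj_onI)
  fix u v assume N: "N > 0" and u: "u \<in> torus N" and v: "v \<in> torus N" and eq: "tau N e u = tau N e v"
  show "u = v"
  proof
    fix i
    have "(u i + cshift N e i) mod int N = (v i + cshift N e i) mod int N"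
      using eq unfolding tau_def by meson
    then have "((u i + cshift N e i) mod int N - cshift N e i) mod int N = ((v i + cshift N e i) mod int N - cshift N e i) mod int N"
      by simp
    then have "u i mod int N = v i mod int N" by (simp add: mod_diff_left_eq)
    then show "u i = v i" using u v unfolding torus_def by simp
  qed
qed

lemma tau_I0:
  assumes N: "4 * n + 4 \<le> N" and u: "u \<in> Pe N n e"
  shows "tau N e u \<in> I0 N n"
  unfolding I0_def
proof (intro CollectI allI)
  fix i
  define H where "H = int (N div 2)"
  have H1: "2 * int n + 2 \<le> H" and H2: "H + H \<le> int N" using N unfolding H_def by linarith+
  have ut: "0 \<le> u i" "u i < int N" using u unfolding Pe_def torus_def by auto
  have ce: "cls N n u i = e i" using u unfolding Pe_def by auto
  show "int n \<le> tau N e u i \<and> tau N e u i + int n < int N"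
  proof (cases "e i")
    case False
    then have "int n \<le> u i \<and> u i + int n < int N" using ce unfolding cls_def by auto
    then show ?thesis using False ut by (simp add: tau_def cshift_def)
  next
    case True
    then have bd: "u i < int n \<or> u i + int n \<ge> int N" using ce unfolding cls_def by auto
    have tv: "tau N e u i = (u i + H) mod int N" using True by (simp add: tau_def cshift_def H_def)
    show ?thesis
    proof (cases "u i < int n")
      case True
      have "(u i + H) mod int N = u i + H" using ut True H1 H2 by (intro mod_pos_pos_trivial) linarith+
      then show ?thesis using tv ut True H1 H2 by linarith
    next
      case False
      then have ge: "u i + int n \<ge> int N" using bd by auto
      have "(u i + H) mod int N = (u i + H - int N) mod int N" by simp
      also have "\<dots> = u i + H - int N" using ut ge H1 H2 by (intro mod_pos_pos_trivial) linarith+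
      finally show ?thesis using tv ut ge H1 H2 by linarith
    qed
  qed
qed



lemma torus_integrable: "integrable (measure_pmf (torus_iid N (p :: 'a::finite pmf))) (h :: (('d::finite \<Rightarrow> int) \<Rightarrow> 'a) \<Rightarrow> real)"
proof (rule integrable_measure_pmf_finite)
  show "finite (set_pmf (torus_iid N p) :: (('d \<Rightarrow> int) \<Rightarrow> 'a) set)"
    unfolding torus_iid_def
    by (rule finite_subset[OF set_Pi_pmf_subset'[OF finite_torus]]) (auto intro!: finite_PiE_dflt finite_torus)
qed

lemma part3_bound:
  fixes p :: "'a::finite pmf" and q :: "'b::finite pmf"
    and \<phi> :: "(('d::finite \<Rightarrow> int) \<Rightarrow> 'a) \<Rightarrow> (('d \<Rightarrow> int) \<Rightarrow> 'b)"
    and f :: "nat \<Rightarrow> (('d \<Rightarrow> int) \<Rightarrow> 'a) \<Rightarrow> 'b option" and gq :: "'b \<Rightarrow> real"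
  assumes hom: "is_homomorphism p q \<phi>"
    and local_fn: "\<forall>n. AE x in iid p. trunc_code p \<phi> n x = f n (restrict x (cube n))"
    and N4: "4 * n + 4 \<le> N"
    and Cq: "\<And>b. \<bar>gq b\<bar> \<le> Cq" and m0: "measure_pmf.expectation q gq = 0"
  defines "a \<equiv> (\<lambda>ob. case ob of None \<Rightarrow> 0 | Some b \<Rightarrow> gq b)"
  defines "M \<equiv> real (card (torus N :: ('d \<Rightarrow> int) set))"
  defines "m \<equiv> card (I0 N n :: ('d \<Rightarrow> int) set)"
  defines "A \<equiv> measure_pmf.expectation (torus_iid N p) (\<lambda>xh. max ((\<Sum>u\<in>torus N. a (torus_code f N n xh u)) / sqrt M) 0)"
    and "EJ \<equiv> measure_pmf.expectation (torus_iid N p) (\<lambda>xh. real (card (Jc f N n xh)))"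
    and "C \<equiv> measure_pmf.expectation (Pi_pmf {..<m} undefined (\<lambda>_. q)) (\<lambda>y. max ((\<Sum>i<m. gq (y i)) / sqrt (real m)) 0)"
  shows "\<bar>A - sqrt (real m / M) * C\<bar>
     \<le> (real (card (UNIV :: ('d \<Rightarrow> bool) set)) * sqrt ((M - real m) * measure_pmf.expectation q (\<lambda>b. (gq b)\<^sup>2))
         + 2 * Cq * EJ) / sqrt M"
proof -
  have N: "N > 0" using N4 by simp
  have Mpos: "M > 0" unfolding M_def card_torus using N by simp
  have Cq0: "Cq \<ge> 0" using Cq[of undefined] by simp
  define s2 where "s2 = measure_pmf.expectation q (\<lambda>b. (gq b)\<^sup>2)"
  have s2nn: "s2 \<ge> 0" unfolding s2_def by (intro integral_nonneg_AE) auto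
  define tc where "tc xh = torus_code f N n xh" for xh
  define T where "T e xh = (\<Sum>u\<in>Pe N n e. a (tc xh u))" for e xh
  define K where "K e xh = real (card {u\<in>Pe N n e. tc xh u = None})" for e xh
  define E where "E h = measure_pmf.expectation (torus_iid N p) h" for h :: "(('d \<Rightarrow> int) \<Rightarrow> 'a) \<Rightarrow> real"
  define e0 where "e0 = (\<lambda>_::'d. False)"
  define R where "R = (UNIV :: ('d \<Rightarrow> bool) set) - {e0}"
  have intE: "integrable (measure_pmf (torus_iid N p)) h" for h :: "(('d \<Rightarrow> int) \<Rightarrow> 'a) \<Rightarrow> real"
    by (rule torus_integrable)
  have P0: "Pe N n e0 = I0 N n" unfolding e0_def by (rule Pe_0)
  have tsum: "(\<Sum>u\<in>torus N. a (tc xh u)) = T e0 xh + (\<Sum>e\<in>R. T e xh)" for xh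
    unfolding sum_partition_Pe[where n=n] T_def R_def by (subst sum.remove[of UNIV e0]) auto
  have Jsum: "real (card (Jc f N n xh)) = (\<Sum>e\<in>UNIV. K e xh)" for xh
  proof -
    have "real (card (Jc f N n xh)) = (\<Sum>u\<in>torus N. if tc xh u = None then 1 else 0)"
      using sum_if_const[OF finite_torus, of "\<lambda>u. tc xh u = None" 1 N] unfolding Jc_def tc_def by simp
    also have "\<dots> = (\<Sum>e\<in>UNIV. \<Sum>u\<in>Pe N n e. if tc xh u = None then 1 else 0)"
      by (rule sum_partition_Pe)
    also have "\<dots> = (\<Sum>e\<in>UNIV. K e xh)"
      unfolding K_def by (intro sum.cong refl) (simp add: sum_if_const finite_subset[OF Pe_torus finite_torus])
    finally show ?thesis .
  qed
  have EJsum: "EJ = (\<Sum>e\<in>UNIV. E (K e))"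
    unfolding EJ_def Jsum E_def using intE by (simp add: Bochner_Integration.integral_sum)
  have EKnn: "E (K e) \<ge> 0" for e unfolding E_def K_def by (intro integral_nonneg_AE) auto
  have finPe: "finite (Pe N n e)" for e by (rule finite_subset[OF Pe_torus finite_torus])
  have cls_bound: "E (\<lambda>xh. \<bar>T e xh\<bar>) \<le> sqrt (real (card (Pe N n e)) * s2) + Cq * E (K e)" for e
  proof -
    define Q where "Q = tau N e ` Pe N n e"
    have inj: "inj_on (tau N e) (Pe N n e)" by (rule inj_on_subset[OF tau_inj[OF N] Pe_torus])
    have QI: "Q \<subseteq> I0 N n" unfolding Q_def using tau_I0[OF N4] by auto
    have finQ: "finite Q" unfolding Q_def using finPe[of e] by simp
    have cQ: "card Q = card (Pe N n e)" unfolding Q_def by (rule card_image[OF inj])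
    have tauc: "tau N e u = (\<lambda>i. (u i + cshift N e i) mod int N)" for u unfolding tau_def ..
    have e1: "E (\<lambda>xh. \<bar>T e xh\<bar>) = E (\<lambda>xh. \<bar>\<Sum>u\<in>Q. a (tc xh u)\<bar>)"
    proof -
      have "E (\<lambda>xh. \<bar>\<Sum>u\<in>Q. a (tc xh u)\<bar>) = E (\<lambda>xh. \<bar>\<Sum>u\<in>Pe N n e. a (tc xh (tau N e u))\<bar>)"
        unfolding Q_def by (simp add: sum.reindex[OF inj])
      also have "\<dots> = E (\<lambda>xh. \<bar>T e xh\<bar>)"
        unfolding E_def T_def tc_def tauc
        by (rule torus_shift[OF N, where \<Phi>="\<lambda>w. \<bar>\<Sum>u\<in>Pe N n e. a (w u)\<bar>"])
      finally show ?thesis by simp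
    qed
    have e2: "E (\<lambda>xh. real (card {u\<in>Q. tc xh u = None})) = E (K e)"
    proof -
      have "card {u\<in>Q. tc xh u = None} = card {u\<in>Pe N n e. tc xh (tau N e u) = None}" for xh
      proof -
        have "{u\<in>Q. tc xh u = None} = tau N e ` {u\<in>Pe N n e. tc xh (tau N e u) = None}" unfolding Q_def by auto
        moreover have "inj_on (tau N e) {u\<in>Pe N n e. tc xh (tau N e u) = None}" by (rule inj_on_subset[OF inj]) auto
        ultimately show ?thesis by (simp add: card_image)
      qed
      then have "E (\<lambda>xh. real (card {u\<in>Q. tc xh u = None})) = E (\<lambda>xh. real (card {u\<in>Pe N n e. tc xh (tau N e u) = None}))"
        by simp
      also have "\<dots> = E (K e)"
        unfolding E_def K_def tc_def tauc
        by (rule torus_shift[OF N, where \<Phi>="\<lambda>w. real (card {u\<in>Pe N n e. w u = None})"])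
      finally show ?thesis .
    qed
    have cb: "E (\<lambda>xh. \<bar>\<Sum>u\<in>Q. a (tc xh u)\<bar>)
        \<le> sqrt (real (card Q) * s2) + Cq * E (\<lambda>xh. real (card {u\<in>Q. tc xh u = None}))"
      unfolding E_def tc_def a_def s2_def
      by (rule coupling_bounds(1)[OF hom local_fn N QI finQ Cq m0])
    show ?thesis using cb e1 e2 cQ by simp
  qed
  have central: "\<bar>E (\<lambda>xh. max (T e0 xh / sqrt M) 0)
      - measure_pmf.expectation (Pi_pmf {..<m} undefined (\<lambda>_. q)) (\<lambda>y. max ((\<Sum>i<m. gq (y i)) / sqrt M) 0)\<bar>
      \<le> Cq * E (K e0) / sqrt M"
    unfolding E_def T_def K_def tc_def a_def P0 m_def
    by (rule coupling_bounds(2)[OF hom local_fn N order_refl finite_I0 Cq m0]) (use Mpos in simp)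
  have cardR: "card (Pe N n e) \<le> card (torus N :: ('d \<Rightarrow> int) set) - m" if "e \<in> R" for e
  proof -
    have "card (Pe N n e) \<le> card (torus N - I0 N n :: ('d \<Rightarrow> int) set)"
      using that by (intro card_mono) (auto simp: R_def e0_def intro: finite_torus dest!: Pe_disj)
    also have "\<dots> = card (torus N :: ('d \<Rightarrow> int) set) - m"
      unfolding m_def by (rule card_Diff_subset[OF finite_I0 I0_torus])
    finally show ?thesis .
  qed
  have mM: "real m \<le> M"
    unfolding M_def m_def by (intro of_nat_mono card_mono[OF finite_torus I0_torus])
  have rest: "(\<Sum>e\<in>R. E (\<lambda>xh. \<bar>T e xh\<bar>)) \<le> real (card (UNIV :: ('d \<Rightarrow> bool) set)) * sqrt ((M - real m) * s2) + Cq * EJ"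
  proof -
    have "(\<Sum>e\<in>R. E (\<lambda>xh. \<bar>T e xh\<bar>)) \<le> (\<Sum>e\<in>R. sqrt ((M - real m) * s2) + Cq * E (K e))"
    proof (rule sum_mono)
      fix e assume eR: "e \<in> R"
      have "real (card (Pe N n e)) \<le> M - real m"
        using cardR[OF eR] mM unfolding M_def by linarith
      then have "sqrt (real (card (Pe N n e)) * s2) \<le> sqrt ((M - real m) * s2)"
        using s2nn by (intro real_sqrt_le_mono mult_right_mono) auto
      then show "E (\<lambda>xh. \<bar>T e xh\<bar>) \<le> sqrt ((M - real m) * s2) + Cq * E (K e)"
        using cls_bound[of e] by linarith
    qed
    also have "\<dots> = real (card R) * sqrt ((M - real m) * s2) + Cq * (\<Sum>e\<in>R. E (K e))"
      by (simp add: sum.distrib sum_distrib_left)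
    also have "real (card R) * sqrt ((M - real m) * s2) \<le> real (card (UNIV :: ('d \<Rightarrow> bool) set)) * sqrt ((M - real m) * s2)"
      unfolding R_def using mM s2nn by (intro mult_right_mono) (auto intro: card_mono)
    also have "(\<Sum>e\<in>R. E (K e)) \<le> (\<Sum>e\<in>UNIV. E (K e))"
      unfolding R_def by (intro sum_mono2) (auto simp: EKnn)
    finally show ?thesis using Cq0 EJsum by (smt (verit) mult_left_mono)
  qed
  have A_eq: "A = E (\<lambda>xh. max ((T e0 xh + (\<Sum>e\<in>R. T e xh)) / sqrt M) 0)"
    unfolding A_def E_def tsum[unfolded tc_def] by simp
  have step1: "\<bar>A - E (\<lambda>xh. max (T e0 xh / sqrt M) 0)\<bar> \<le> (\<Sum>e\<in>R. E (\<lambda>xh. \<bar>T e xh\<bar>)) / sqrt M"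
  proof -
    have "\<bar>A - E (\<lambda>xh. max (T e0 xh / sqrt M) 0)\<bar>
        = \<bar>E (\<lambda>xh. max ((T e0 xh + (\<Sum>e\<in>R. T e xh)) / sqrt M) 0 - max (T e0 xh / sqrt M) 0)\<bar>"
      unfolding A_eq E_def using intE by simp
    also have "\<dots> \<le> E (\<lambda>xh. \<bar>max ((T e0 xh + (\<Sum>e\<in>R. T e xh)) / sqrt M) 0 - max (T e0 xh / sqrt M) 0\<bar>)"
      unfolding E_def by (rule integral_abs_bound)
    also have "\<dots> \<le> E (\<lambda>xh. (\<Sum>e\<in>R. \<bar>T e xh\<bar>) / sqrt M)"
      unfolding E_def
    proof (rule integral_mono[OF intE intE])
      fix xh
      have "\<bar>max ((T e0 xh + (\<Sum>e\<in>R. T e xh)) / sqrt M) 0 - max (T e0 xh / sqrt M) 0\<bar>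
          \<le> \<bar>(T e0 xh + (\<Sum>e\<in>R. T e xh)) - T e0 xh\<bar> / sqrt M"
        by (rule max_div_diff) (use Mpos in simp)
      also have "\<dots> \<le> (\<Sum>e\<in>R. \<bar>T e xh\<bar>) / sqrt M"
        using Mpos by (intro divide_right_mono) (auto intro: sum_abs)
      finally show "\<bar>max ((T e0 xh + (\<Sum>e\<in>R. T e xh)) / sqrt M) 0 - max (T e0 xh / sqrt M) 0\<bar>
          \<le> (\<Sum>e\<in>R. \<bar>T e xh\<bar>) / sqrt M" .
    qed
    also have "\<dots> = (\<Sum>e\<in>R. E (\<lambda>xh. \<bar>T e xh\<bar>)) / sqrt M"
      unfolding E_def using intE by (simp add: Bochner_Integration.integral_sum)
    finally show ?thesis .
  qed
  have mpos: "m > 0" unfolding m_def using N4 by (subst card_I0) auto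
  have step3: "measure_pmf.expectation (Pi_pmf {..<m} undefined (\<lambda>_. q)) (\<lambda>y. max ((\<Sum>i<m. gq (y i)) / sqrt M) 0)
       = sqrt (real m / M) * C"
  proof -
    have "max ((\<Sum>i<m. gq (y i)) / sqrt M) 0 = sqrt (real m / M) * max ((\<Sum>i<m. gq (y i)) / sqrt (real m)) 0" for y
    proof -
      have "(\<Sum>i<m. gq (y i)) / sqrt M = sqrt (real m / M) * ((\<Sum>i<m. gq (y i)) / sqrt (real m))"
        using mpos Mpos by (simp add: real_sqrt_divide)
      then show ?thesis using max_cmult[of "sqrt (real m / M)" "(\<Sum>i<m. gq (y i)) / sqrt (real m)"] Mpos by simp
    qed
    then show ?thesis unfolding C_def by simp
  qed
  have EK0: "E (K e0) \<le> EJ"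
    unfolding EJsum by (rule member_le_sum) (auto simp: EKnn)
  have "\<bar>A - sqrt (real m / M) * C\<bar>
      \<le> \<bar>A - E (\<lambda>xh. max (T e0 xh / sqrt M) 0)\<bar> + \<bar>E (\<lambda>xh. max (T e0 xh / sqrt M) 0) - sqrt (real m / M) * C\<bar>"
    by linarith
  also have "\<dots> \<le> (real (card (UNIV :: ('d \<Rightarrow> bool) set)) * sqrt ((M - real m) * s2) + Cq * EJ) / sqrt M + Cq * EJ / sqrt M"
  proof (rule add_mono)
    show "\<bar>A - E (\<lambda>xh. max (T e0 xh / sqrt M) 0)\<bar> \<le> (real (card (UNIV :: ('d \<Rightarrow> bool) set)) * sqrt ((M - real m) * s2) + Cq * EJ) / sqrt M"
      using step1 rest Mpos by (smt (verit) divide_right_mono real_sqrt_gt_zero)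
    show "\<bar>E (\<lambda>xh. max (T e0 xh / sqrt M) 0) - sqrt (real m / M) * C\<bar> \<le> Cq * EJ / sqrt M"
      using central step3 EK0 Cq0 Mpos by (smt (verit) divide_right_mono mult_left_mono real_sqrt_gt_zero)
  qed
  also have "\<dots> = (real (card (UNIV :: ('d \<Rightarrow> bool) set)) * sqrt ((M - real m) * s2) + 2 * Cq * EJ) / sqrt M"
    by (simp add: add_divide_distrib)
  finally show ?thesis unfolding s2_def .
qed



lemma approx_lim:
  fixes A B e :: "nat \<Rightarrow> real"
  assumes ev: "eventually (\<lambda>N. \<bar>A N - B N\<bar> \<le> e N) sequentially"
    and e: "e \<longlonglongrightarrow> 0" and B: "B \<longlonglongrightarrow> L"
  shows "A \<longlonglongrightarrow> L"
proof -
  have "(\<lambda>N. A N - B N) \<longlonglongrightarrow> 0"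
  proof (rule tendsto_sandwich[of "\<lambda>N. - e N" _ _ e])
    show "eventually (\<lambda>N. - e N \<le> A N - B N) sequentially" using ev by eventually_elim linarith
    show "eventually (\<lambda>N. A N - B N \<le> e N) sequentially" using ev by eventually_elim linarith
    show "(\<lambda>N. - e N) \<longlonglongrightarrow> 0" using tendsto_minus[OF e] by simp
  qed (rule e)
  then have "(\<lambda>N. (A N - B N) + B N) \<longlonglongrightarrow> 0 + L" by (intro tendsto_add B)
  then show ?thesis by simp
qed

lemma sqrt_card_torus:
  "sqrt (real (card (torus N :: ('d::finite \<Rightarrow> int) set))) = real N powr (real CARD('d) / 2)"
proof (cases "N = 0")
  case True then show ?thesis by (simp add: card_torus)
next
  case False
  then have "real N powr (real CARD('d) / 2) = (real N powr real CARD('d)) powr (1/2)"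
    by (simp add: powr_powr)
  also have "\<dots> = sqrt (real N ^ CARD('d))"
    using False by (simp add: powr_realpow powr_half_sqrt)
  finally show ?thesis by (simp add: card_torus)
qed

lemma part3:
  fixes p :: "'a::finite pmf" and q :: "'b::finite pmf"
    and \<phi> :: "(('d::finite \<Rightarrow> int) \<Rightarrow> 'a) \<Rightarrow> (('d \<Rightarrow> int) \<Rightarrow> 'b)"
    and f :: "nat \<Rightarrow> (('d \<Rightarrow> int) \<Rightarrow> 'a) \<Rightarrow> 'b option"
    and \<delta> :: "nat \<Rightarrow> real"
  assumes hom: "is_homomorphism p q \<phi>"
    and local_fn: "\<forall>n. AE x in iid p. trunc_code p \<phi> n x = f n (restrict x (cube n))"
    and dec: "decseq \<delta>" and lim: "\<delta> \<longlonglongrightarrow> 0"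
    and P1: "(\<lambda>N. measure_pmf.expectation (torus_iid N p)
              (\<lambda>xh. real (card (Jc f N (nat \<lfloor>\<delta> N * real N\<rfloor>) xh)))
            / sqrt (real (card (torus N :: ('d \<Rightarrow> int) set)))) \<longlonglongrightarrow> 0"
  shows "(\<lambda>N. measure_pmf.expectation (torus_iid N p)
              (\<lambda>xh. max ((1 / sqrt (real (card (torus N :: ('d \<Rightarrow> int) set))))
                   * (\<Sum>u\<in>{u \<in> torus N. torus_code f N (nat \<lfloor>\<delta> N * real N\<rfloor>) xh u \<noteq> None}.
                        shannon_entropy q + ln (pmf q (the (torus_code f N (nat \<lfloor>\<delta> N * real N\<rfloor>) xh u))))) 0))
         \<longlonglongrightarrow> sqrt (measure_pmf.variance q (\<lambda>b. ln (pmf q b))) / sqrt (2 * pi)"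
proof -
  define nN where "nN N = nat \<lfloor>\<delta> N * real N\<rfloor>" for N
  define gq where "gq b = shannon_entropy q + ln (pmf q b)" for b
  define Cq where "Cq = (\<Sum>b\<in>UNIV. \<bar>gq b\<bar>)"
  have Cqb: "\<bar>gq b\<bar> \<le> Cq" for b unfolding Cq_def by (rule member_le_sum) auto
  have m0: "measure_pmf.expectation q gq = 0" unfolding gq_def by (rule entropy_center(1))
  define s2 where "s2 = measure_pmf.expectation q (\<lambda>b. (gq b)\<^sup>2)"
  have L: "sqrt (measure_pmf.variance q (\<lambda>b. ln (pmf q b))) / sqrt (2 * pi) = sqrt s2 / sqrt (2 * pi)"
    unfolding s2_def gq_def by (simp add: entropy_center(2))
  define a where "a = (\<lambda>ob. case ob of None \<Rightarrow> 0 | Some b \<Rightarrow> gq b)"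
  define M where "M N = real (card (torus N :: ('d \<Rightarrow> int) set))" for N
  define mm where "mm N = card (I0 N (nN N) :: ('d \<Rightarrow> int) set)" for N
  define Cs where "Cs m = measure_pmf.expectation (Pi_pmf {..<m} undefined (\<lambda>_. q)) (\<lambda>y. max ((\<Sum>i<m. gq (y i)) / sqrt (real m)) 0)" for m
  define EJ where "EJ N = measure_pmf.expectation (torus_iid N p) (\<lambda>xh. real (card (Jc f N (nN N) xh)))" for N
  define D2 where "D2 = real (card (UNIV :: ('d \<Rightarrow> bool) set))"
  define d where "d = CARD('d)"
  have d1: "d \<ge> 1" unfolding d_def by (simp add: Suc_le_eq)
  have Mpow: "M N = real N ^ d" for N unfolding M_def d_def by (simp add: card_torus)
  have clt: "Cs \<longlonglongrightarrow> sqrt s2 / sqrt (2 * pi)" unfolding Cs_def s2_def by (rule clt_pos[OF m0])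
  have \<delta>nn: "\<delta> N \<ge> 0" for N using decseq_ge[OF dec lim] by simp
  have nle: "real (nN N) \<le> \<delta> N * real N" for N
    unfolding nN_def using \<delta>nn[of N] by (simp add: of_nat_nat)
  have rat: "(\<lambda>N. real (nN N) / real N) \<longlonglongrightarrow> 0"
  proof (rule tendsto_sandwich[of "\<lambda>_. 0" _ _ \<delta>])
    show "eventually (\<lambda>N. 0 \<le> real (nN N) / real N) sequentially" by simp
    show "eventually (\<lambda>N. real (nN N) / real N \<le> \<delta> N) sequentially"
    proof (rule always_eventually, rule allI)
      fix N show "real (nN N) / real N \<le> \<delta> N"
        using nle[of N] \<delta>nn[of N] by (cases "N = 0") (auto simp: divide_le_eq mult.commute)
    qed
  qed (auto simp: lim)
  have ev4: "eventually (\<lambda>N. 4 * nN N + 4 \<le> N) sequentially"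
  proof -
    have "eventually (\<lambda>N. real (nN N) / real N < 1/8) sequentially"
      using order_tendstoD(2)[OF rat, of "1/8"] by simp
    moreover have "eventually (\<lambda>N. N \<ge> 8) sequentially" by (rule eventually_ge_at_top)
    ultimately show ?thesis
    proof eventually_elim
      case (elim N)
      then have "real (nN N) < real N / 8" by (simp add: divide_less_eq)
      then have "real (4 * nN N + 4) \<le> real N" using elim(2) by simp
      then show ?case by linarith
    qed
  qed
  have mm_eq: "4 * nN N + 4 \<le> N \<Longrightarrow> mm N = (N - 2 * nN N) ^ d" for N
    unfolding mm_def d_def by (rule card_I0) simp
  have ratio: "(\<lambda>N. real (mm N) / M N) \<longlonglongrightarrow> 1"
  proof -
    have "(\<lambda>N. (1 - 2 * (real (nN N) / real N)) ^ d) \<longlonglongrightarrow> (1 - 2 * 0) ^ d"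
      by (intro tendsto_intros rat)
    then have "(\<lambda>N. (1 - 2 * (real (nN N) / real N)) ^ d) \<longlonglongrightarrow> 1" by simp
    moreover have "eventually (\<lambda>N. (1 - 2 * (real (nN N) / real N)) ^ d = real (mm N) / M N) sequentially"
      using ev4
    proof eventually_elim
      case (elim N)
      then have N0: "real N > 0" by simp
      have "real (mm N) / M N = (real (N - 2 * nN N) / real N) ^ d"
        unfolding mm_eq[OF elim] Mpow by (simp add: power_divide)
      also have "real (N - 2 * nN N) = real N - 2 * real (nN N)" using elim by (simp add: of_nat_diff)
      also have "(real N - 2 * real (nN N)) / real N = 1 - 2 * (real (nN N) / real N)"
        using N0 by (simp add: field_simps)
      finally show ?case by simp
    qed
    ultimately show ?thesis by (rule Lim_transform_eventually)
  qed
  have mm_top: "filterlim mm sequentially sequentially"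
    unfolding filterlim_at_top
  proof
    fix Z :: nat
    have "eventually (\<lambda>N. N \<ge> 2 * Z) sequentially" by (rule eventually_ge_at_top)
    then show "eventually (\<lambda>N. Z \<le> mm N) sequentially"
      using ev4
    proof eventually_elim
      case (elim N)
      have "Z \<le> N - 2 * nN N" using elim by linarith
      also have "\<dots> \<le> (N - 2 * nN N) ^ d"
        using elim d1 by (intro self_le_power) auto
      finally show ?case using mm_eq[OF elim(2)] by simp
    qed
  qed
  have Blim: "(\<lambda>N. sqrt (real (mm N) / M N) * Cs (mm N)) \<longlonglongrightarrow> sqrt 1 * (sqrt s2 / sqrt (2 * pi))"
    by (intro tendsto_mult tendsto_real_sqrt ratio filterlim_compose[OF clt mm_top])
  have EJlim: "(\<lambda>N. EJ N / sqrt (M N)) \<longlonglongrightarrow> 0"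
    using P1 unfolding EJ_def M_def nN_def .
  define eps where "eps N = (D2 * sqrt ((M N - real (mm N)) * s2) + 2 * Cq * EJ N) / sqrt (M N)" for N
  have epslim: "eps \<longlonglongrightarrow> 0"
  proof -
    have "(\<lambda>N. D2 * sqrt ((1 - real (mm N) / M N) * s2) + 2 * Cq * (EJ N / sqrt (M N)))
        \<longlonglongrightarrow> D2 * sqrt ((1 - 1) * s2) + 2 * Cq * 0"
      by (intro tendsto_intros ratio EJlim)
    then have "(\<lambda>N. D2 * sqrt ((1 - real (mm N) / M N) * s2) + 2 * Cq * (EJ N / sqrt (M N))) \<longlonglongrightarrow> 0" by simp
    moreover have "eventually (\<lambda>N. D2 * sqrt ((1 - real (mm N) / M N) * s2) + 2 * Cq * (EJ N / sqrt (M N)) = eps N) sequentially"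
      using ev4
    proof eventually_elim
      case (elim N)
      then have Mp: "M N > 0" unfolding Mpow by simp
      have "sqrt ((M N - real (mm N)) * s2) / sqrt (M N) = sqrt ((1 - real (mm N) / M N) * s2)"
        using Mp by (simp add: real_sqrt_divide[symmetric] field_simps)
      moreover have "eps N = D2 * (sqrt ((M N - real (mm N)) * s2) / sqrt (M N)) + 2 * Cq * (EJ N / sqrt (M N))"
        unfolding eps_def by (simp add: add_divide_distrib)
      ultimately show ?case by simp
    qed
    ultimately show ?thesis by (rule Lim_transform_eventually)
  qed
  define A where "A N = measure_pmf.expectation (torus_iid N p)
              (\<lambda>xh. max ((1 / sqrt (real (card (torus N :: ('d \<Rightarrow> int) set))))
                   * (\<Sum>u\<in>{u \<in> torus N. torus_code f N (nat \<lfloor>\<delta> N * real N\<rfloor>) xh u \<noteq> None}.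
                        shannon_entropy q + ln (pmf q (the (torus_code f N (nat \<lfloor>\<delta> N * real N\<rfloor>) xh u))))) 0)" for N
  have A_eq: "A N = measure_pmf.expectation (torus_iid N p) (\<lambda>xh. max ((\<Sum>u\<in>torus N. a (torus_code f N (nN N) xh u)) / sqrt (M N)) 0)" for N
  proof -
    have "(1 / sqrt (real (card (torus N :: ('d \<Rightarrow> int) set))))
                   * (\<Sum>u\<in>{u \<in> torus N. torus_code f N (nN N) xh u \<noteq> None}.
                        shannon_entropy q + ln (pmf q (the (torus_code f N (nN N) xh u))))
        = (\<Sum>u\<in>torus N. a (torus_code f N (nN N) xh u)) / sqrt (M N)" for xh
    proof -
      have "(\<Sum>u\<in>{u \<in> torus N. torus_code f N (nN N) xh u \<noteq> None}.
                        shannon_entropy q + ln (pmf q (the (torus_code f N (nN N) xh u))))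
          = (\<Sum>u\<in>torus N. a (torus_code f N (nN N) xh u))"
        unfolding sum.inter_filter[OF finite_torus]
        by (intro sum.cong refl) (auto simp: a_def gq_def split: option.split)
      then show ?thesis unfolding M_def by simp
    qed
    then show ?thesis unfolding A_def nN_def by simp
  qed
  have bound: "eventually (\<lambda>N. \<bar>A N - sqrt (real (mm N) / M N) * Cs (mm N)\<bar> \<le> eps N) sequentially"
    using ev4
  proof eventually_elim
    case (elim N)
    show ?case
      unfolding A_eq eps_def M_def mm_def Cs_def EJ_def D2_def s2_def
      by (rule part3_bound[OF hom local_fn elim Cqb m0, unfolded a_def[symmetric]])
  qed
  have "A \<longlonglongrightarrow> sqrt 1 * (sqrt s2 / sqrt (2 * pi))"
    by (rule approx_lim[OF bound epslim Blim])
  then show ?thesis unfolding A_def L by simp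
qed


theorem proposition8:
  fixes p :: "'a::finite pmf" and q :: "'b::finite pmf"
    and \<phi> :: "(('d::finite \<Rightarrow> int) \<Rightarrow> 'a) \<Rightarrow> (('d \<Rightarrow> int) \<Rightarrow> 'b)"
    and f :: "nat \<Rightarrow> (('d \<Rightarrow> int) \<Rightarrow> 'a) \<Rightarrow> 'b option"
    and \<delta> :: "nat \<Rightarrow> real"
  assumes entropy_eq: "shannon_entropy p = shannon_entropy q"
    and hom: "is_homomorphism p q \<phi>"
    and fin: "finitary p \<phi>"
    and moment: "(\<integral>\<^sup>+ x. ennreal (real (the_enat (coding_radius p \<phi> x)) powr (real CARD('d) / 2)) \<partial>iid p) < \<infinity>"
    and local_fn: "\<forall>n. AE x in iid p. trunc_code p \<phi> n x = f n (restrict x (cube n))"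
    and dec: "decseq \<delta>" and lim: "\<delta> \<longlonglongrightarrow> 0"
    and small: "(\<lambda>N. measure_pmf.expectation (torus_iid N p)
                  (\<lambda>xh. real (card (Jc f N (nat \<lfloor>\<delta> N * real N\<rfloor>) xh))))
                \<in> o(\<lambda>N. real N powr (real CARD('d) / 2))"
  shows "((\<lambda>N. measure_pmf.expectation (torus_iid N p)
              (\<lambda>xh. real (card (Jc f N (nat \<lfloor>\<delta> N * real N\<rfloor>) xh)))
            / sqrt (real (card (torus N :: ('d \<Rightarrow> int) set)))) \<longlonglongrightarrow> 0)
    \<and> ((\<lambda>N. measure_pmf.expectation (torus_iid N p)
              (\<lambda>xh :: ('d \<Rightarrow> int) \<Rightarrow> 'a. max ((1 / sqrt (real (card (torus N :: ('d \<Rightarrow> int) set))))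
                   * (\<Sum>u\<in>torus N. shannon_entropy p + ln (pmf p (xh u)))) 0))
         \<longlonglongrightarrow> sqrt (measure_pmf.variance p (\<lambda>a. ln (pmf p a))) / sqrt (2 * pi))
    \<and> ((\<lambda>N. measure_pmf.expectation (torus_iid N p)
              (\<lambda>xh. max ((1 / sqrt (real (card (torus N :: ('d \<Rightarrow> int) set))))
                   * (\<Sum>u\<in>{u \<in> torus N. torus_code f N (nat \<lfloor>\<delta> N * real N\<rfloor>) xh u \<noteq> None}.
                        shannon_entropy q + ln (pmf q (the (torus_code f N (nat \<lfloor>\<delta> N * real N\<rfloor>) xh u))))) 0))
         \<longlonglongrightarrow> sqrt (measure_pmf.variance q (\<lambda>b. ln (pmf q b))) / sqrt (2 * pi))"
  proof -
  have P1: "(\<lambda>N. measure_pmf.expectation (torus_iid N p)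
              (\<lambda>xh. real (card (Jc f N (nat \<lfloor>\<delta> N * real N\<rfloor>) xh)))
            / sqrt (real (card (torus N :: ('d \<Rightarrow> int) set)))) \<longlonglongrightarrow> 0"
    using smalloD_tendsto[OF small] unfolding sqrt_card_torus .
  show ?thesis
    using P1 part2[of p] part3[OF hom local_fn dec lim P1] by blast
qed

end
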